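(* Let $C$ be a quantum circuit comprised of $d$ layers of nearest-neighbor two-qubit gates on a $D$-dimensional lattice $\Lambda$, let $H$ be its parent Hamiltonian and $\beta>0$. Then for any pairwise disjoint $A,B,C'\subseteq\Lambda$ with $X=A\cup B\cup C'$ and lattice distance $d(A,C')\ge 4d+1$, the Gibbs states satisfy local indistinguishability: $\mathrm{Tr}_{BC'}\rho^X=\mathrm{Tr}_B\rho^{AB}$.
   Context: $H=\sum_{i\in\Lambda}h_i$ with $h_i=C(|1\rangle\langle1|_i\otimes\mathbb I)C^\dagger$. For $Y\subseteq\Lambda$, $H_Y=\sum_{i:\,\mathrm{supp}(h_i)\subseteq Y}h_i$ (the terms entirely contained in $Y$) and $\rho^Y=e^{-\beta H_Y}/\mathrm{Tr}\,e^{-\beta H_Y}$, a state on the qubits of $Y$; $AB$ denotes $A\cup B$. The distance $d(A,C')=\min_{i\in A,j\in C'}d(i,j)$ is the graph (path-length) distance on the lattice. *)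

theory Defs
  imports Complex_Main "HOL-Library.Extended_Nat"
begin

text \<open>A computational basis state of the qubits in a set Y of
  sites is a configuration: a function from sites to bool that is False outside Y.
  An operator on the qubits of Y is a complex-valued function on pairs of configurations
  (its matrix in the computational basis); only values on configurations of Y matter.\<close>

type_synonym 's qop = "('s \<Rightarrow> bool) \<Rightarrow> ('s \<Rightarrow> bool) \<Rightarrow> complex"

definition configs :: "'s set \<Rightarrow> ('s \<Rightarrow> bool) set" where
  "configs Y = {\<sigma>. \<forall>i. i \<notin> Y \<longrightarrow> \<not> \<sigma> i}"

definition op_mult :: "'s set \<Rightarrow> 's qop \<Rightarrow> 's qop \<Rightarrow> 's qop" where
  "op_mult Y P Q = (\<lambda>\<sigma> \<tau>. \<Sum>\<mu>\<in>configs Y. P \<sigma> \<mu> * Q \<mu> \<tau>)"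

definition op_id :: "'s set \<Rightarrow> 's qop" where
  "op_id Y = (\<lambda>\<sigma> \<tau>. if \<sigma> = \<tau> \<and> \<sigma> \<in> configs Y then 1 else 0)"

definition op_adj :: "'s qop \<Rightarrow> 's qop" where
  "op_adj P = (\<lambda>\<sigma> \<tau>. cnj (P \<tau> \<sigma>))"

fun op_pow :: "'s set \<Rightarrow> 's qop \<Rightarrow> nat \<Rightarrow> 's qop" where
  "op_pow Y P 0 = op_id Y"
| "op_pow Y P (Suc n) = op_mult Y (op_pow Y P n) P"

definition op_exp :: "'s set \<Rightarrow> 's qop \<Rightarrow> 's qop" where
  "op_exp Y P = (\<lambda>\<sigma> \<tau>. \<Sum>k. op_pow Y P k \<sigma> \<tau> / of_nat (fact k))"

definition op_trace :: "'s set \<Rightarrow> 's qop \<Rightarrow> complex" where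
  "op_trace Y P = (\<Sum>\<sigma>\<in>configs Y. P \<sigma> \<sigma>)"

definition unitary_on :: "'s set \<Rightarrow> 's qop \<Rightarrow> bool" where
  "unitary_on Y U \<longleftrightarrow> (\<forall>\<sigma>\<in>configs Y. \<forall>\<tau>\<in>configs Y.
      op_mult Y U (op_adj U) \<sigma> \<tau> = op_id Y \<sigma> \<tau> \<and> op_mult Y (op_adj U) U \<sigma> \<tau> = op_id Y \<sigma> \<tau>)"

definition merge :: "'s set \<Rightarrow> ('s \<Rightarrow> bool) \<Rightarrow> ('s \<Rightarrow> bool) \<Rightarrow> ('s \<Rightarrow> bool)" where
  "merge S \<mu> \<sigma> = (\<lambda>i. if i \<in> S then \<mu> i else \<sigma> i)"

definition restr :: "'s set \<Rightarrow> ('s \<Rightarrow> bool) \<Rightarrow> ('s \<Rightarrow> bool)" where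
  "restr S \<sigma> = (\<lambda>i. i \<in> S \<and> \<sigma> i)"

definition ptrace :: "'s set \<Rightarrow> 's qop \<Rightarrow> 's qop" where
  "ptrace S P = (\<lambda>\<sigma> \<tau>. \<Sum>\<mu>\<in>configs S. P (merge S \<mu> \<sigma>) (merge S \<mu> \<tau>))"

text \<open>Embedding an operator U on the qubits of S into the qubits of Lam: U tensor identity.\<close>
definition ext_op :: "'s set \<Rightarrow> 's set \<Rightarrow> 's qop \<Rightarrow> 's qop" where
  "ext_op Lam S U = (\<lambda>\<sigma> \<tau>. if \<sigma> \<in> configs Lam \<and> \<tau> \<in> configs Lam \<and> (\<forall>k. k \<notin> S \<longrightarrow> \<sigma> k = \<tau> k)
      then U (restr S \<sigma>) (restr S \<tau>) else 0)"

definition acts_within :: "'s set \<Rightarrow> 's set \<Rightarrow> 's qop \<Rightarrow> bool" where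
  "acts_within Lam S h \<longleftrightarrow> (\<exists>U. \<forall>\<sigma>\<in>configs Lam. \<forall>\<tau>\<in>configs Lam. h \<sigma> \<tau> = ext_op Lam S U \<sigma> \<tau>)"

definition op_supp :: "'s set \<Rightarrow> 's qop \<Rightarrow> 's set" where
  "op_supp Lam h = \<Inter>{S. S \<subseteq> Lam \<and> acts_within Lam S h}"

definition proj1 :: "'s set \<Rightarrow> 's \<Rightarrow> 's qop" where
  "proj1 Lam i = (\<lambda>\<sigma> \<tau>. if \<sigma> = \<tau> \<and> \<sigma> \<in> configs Lam \<and> \<sigma> i then 1 else 0)"

text \<open>Sites of the D-dimensional lattice are integer vectors (lists of length D).\<close>
type_synonym site = "int list"

definition lat_adjacent :: "site \<Rightarrow> site \<Rightarrow> bool" where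
  "lat_adjacent x y \<longleftrightarrow> length x = length y \<and> (\<Sum>k<length x. \<bar>x ! k - y ! k\<bar>) = 1"

definition lat_edges :: "site set \<Rightarrow> (site \<times> site) set" where
  "lat_edges Lam = {(x, y). x \<in> Lam \<and> y \<in> Lam \<and> lat_adjacent x y}"

definition lat_dist :: "site set \<Rightarrow> site \<Rightarrow> site \<Rightarrow> enat" where
  "lat_dist Lam x y = (if \<exists>k. (x, y) \<in> lat_edges Lam ^^ k
      then enat (LEAST k. (x, y) \<in> lat_edges Lam ^^ k) else \<infinity>)"

text \<open>A gate (i, j, U): a two-qubit unitary U acting on the qubits at sites i and j.\<close>
type_synonym gate = "site \<times> site \<times> site qop"
type_synonym layer = "gate list"

definition gate_sites :: "gate \<Rightarrow> site set" where
  "gate_sites g = {fst g, fst (snd g)}"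

definition valid_gate :: "site set \<Rightarrow> gate \<Rightarrow> bool" where
  "valid_gate Lam g \<longleftrightarrow> (case g of (i, j, U) \<Rightarrow>
      i \<in> Lam \<and> j \<in> Lam \<and> lat_adjacent i j \<and> unitary_on {i, j} U)"

definition valid_layer :: "site set \<Rightarrow> layer \<Rightarrow> bool" where
  "valid_layer Lam L \<longleftrightarrow> (\<forall>g\<in>set L. valid_gate Lam g) \<and>
      (\<forall>a<length L. \<forall>b<length L. a \<noteq> b \<longrightarrow> gate_sites (L ! a) \<inter> gate_sites (L ! b) = {})"

definition layer_op :: "site set \<Rightarrow> layer \<Rightarrow> site qop" where
  "layer_op Lam L = foldr (\<lambda>g acc. op_mult Lam (ext_op Lam (gate_sites g) (snd (snd g))) acc) L (op_id Lam)"

text \<open>Circuit [L_1, ..., L_d] has unitary C = L_d ... L_1.\<close>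
definition circuit_op :: "site set \<Rightarrow> layer list \<Rightarrow> site qop" where
  "circuit_op Lam Ls = fold (\<lambda>L acc. op_mult Lam (layer_op Lam L) acc) Ls (op_id Lam)"

definition parent_term :: "site set \<Rightarrow> layer list \<Rightarrow> site \<Rightarrow> site qop" where
  "parent_term Lam Ls i = op_mult Lam (op_mult Lam (circuit_op Lam Ls) (proj1 Lam i)) (op_adj (circuit_op Lam Ls))"

definition H_sub :: "site set \<Rightarrow> layer list \<Rightarrow> site set \<Rightarrow> site qop" where
  "H_sub Lam Ls Y = (\<lambda>\<sigma> \<tau>. \<Sum>i\<in>{i\<in>Lam. op_supp Lam (parent_term Lam Ls i) \<subseteq> Y}. parent_term Lam Ls i \<sigma> \<tau>)"

definition gibbs_sub :: "site set \<Rightarrow> layer list \<Rightarrow> real \<Rightarrow> site set \<Rightarrow> site qop" where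
  "gibbs_sub Lam Ls \<beta> Y =
     (let E = op_exp Y (\<lambda>\<sigma> \<tau>. - complex_of_real \<beta> * H_sub Lam Ls Y \<sigma> \<tau>)
      in (\<lambda>\<sigma> \<tau>. E \<sigma> \<tau> / op_trace Y E))"

end

theory Submission
  imports Defs
begin

definition agr :: "'s set \<Rightarrow> ('s \<Rightarrow> bool) \<Rightarrow> ('s \<Rightarrow> bool) \<Rightarrow> bool" where
  "agr S \<sigma> \<tau> \<longleftrightarrow> (\<forall>k. k \<notin> S \<longrightarrow> \<sigma> k = \<tau> k)"

definition loc :: "'s set \<Rightarrow> 's set \<Rightarrow> 's qop \<Rightarrow> bool" where
  "loc Lam S h \<longleftrightarrow> (\<forall>\<sigma>\<in>configs Lam. \<forall>\<tau>\<in>configs Lam.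
     h \<sigma> \<tau> = (if agr S \<sigma> \<tau> then h (restr S \<sigma>) (restr S \<tau>) else 0))"

lemma configs_iff: "\<sigma> \<in> configs S \<longleftrightarrow> (\<forall>i. \<sigma> i \<longrightarrow> i \<in> S)"
  unfolding configs_def by auto

lemma finite_configs: assumes "finite S" shows "finite (configs S)"
proof -
  have "configs S \<subseteq> (\<lambda>T i. i \<in> T) ` Pow S"
  proof
    fix \<sigma> assume "\<sigma> \<in> configs S"
    then have "{i. \<sigma> i} \<in> Pow S" "\<sigma> = (\<lambda>i. i \<in> {i. \<sigma> i})" by (auto simp: configs_iff)
    then show "\<sigma> \<in> (\<lambda>T i. i \<in> T) ` Pow S" by blast
  qed
  then show ?thesis using assms finite_subset by blast
qed

lemma card_configs: assumes "finite S" shows "card (configs S) = 2 ^ card S"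
proof -
  have "bij_betw (\<lambda>T i. i \<in> T) (Pow S) (configs S)"
    unfolding bij_betw_def
  proof
    show "inj_on (\<lambda>T i. i \<in> T) (Pow S)" by (rule inj_onI) (metis Collect_mem_eq)
    show "(\<lambda>T i. i \<in> T) ` Pow S = configs S"
    proof
      show "(\<lambda>T i. i \<in> T) ` Pow S \<subseteq> configs S" by (auto simp: configs_iff)
      show "configs S \<subseteq> (\<lambda>T i. i \<in> T) ` Pow S"
      proof
        fix \<sigma> assume "\<sigma> \<in> configs S"
        then have "{i. \<sigma> i} \<in> Pow S" "\<sigma> = (\<lambda>i. i \<in> {i. \<sigma> i})" by (auto simp: configs_iff)
        then show "\<sigma> \<in> (\<lambda>T i. i \<in> T) ` Pow S" by blast
      qed
    qed
  qed
  then have "card (configs S) = card (Pow S)" by (simp add: bij_betw_same_card)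
  then show ?thesis using assms by (simp add: card_Pow)
qed

lemma restr_configs[simp]: "restr S \<sigma> \<in> configs S"
  by (auto simp: restr_def configs_iff)

lemma restr_configs2: "\<sigma> \<in> configs Lam \<Longrightarrow> restr S \<sigma> \<in> configs Lam"
  by (auto simp: restr_def configs_iff)

lemma merge_configs: "a \<in> configs S \<Longrightarrow> \<sigma> \<in> configs T \<Longrightarrow> merge S a \<sigma> \<in> configs (S \<union> T)"
  by (auto simp: merge_def configs_iff)

lemma merge_configs2: "a \<in> configs S \<Longrightarrow> \<sigma> \<in> configs Lam \<Longrightarrow> S \<subseteq> Lam \<Longrightarrow> merge S a \<sigma> \<in> configs Lam"
  by (auto simp: merge_def configs_iff)

lemma configs_mono: "S \<subseteq> T \<Longrightarrow> configs S \<subseteq> configs T"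
  by (auto simp: configs_def)

lemma bot_configs[simp]: "(\<lambda>_. False) \<in> configs S"
  by (auto simp: configs_iff)

lemma restr_merge_same: "a \<in> configs S \<Longrightarrow> restr S (merge S a \<sigma>) = a"
  by (auto simp: restr_def merge_def configs_iff fun_eq_iff)

lemma restr_id: "\<sigma> \<in> configs S \<Longrightarrow> restr S \<sigma> = \<sigma>"
  by (auto simp: restr_def configs_iff fun_eq_iff)

lemma split_sum:
  assumes "finite P" "finite Q" "P \<inter> Q = {}"
  shows "(\<Sum>\<mu>\<in>configs (P \<union> Q). f \<mu>) = (\<Sum>a\<in>configs P. \<Sum>b\<in>configs Q. f (merge P a b))"
proof -
  have bij: "bij_betw (\<lambda>(a, b). merge P a b) (configs P \<times> configs Q) (configs (P \<union> Q))"
    unfolding bij_betw_def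
  proof
    show "inj_on (\<lambda>(a, b). merge P a b) (configs P \<times> configs Q)"
    proof (rule inj_onI, clarsimp)
      fix a b a' b'
      assume h: "a \<in> configs P" "b \<in> configs Q" "a' \<in> configs P" "b' \<in> configs Q"
        "merge P a b = merge P a' b'"
      show "a = a' \<and> b = b'"
      proof
        show "a = a'"
        proof
          fix i have e: "merge P a b i = merge P a' b' i" using h(5) by simp
          show "a i = a' i" using h(1,3) e
            by (cases "i \<in> P") (auto simp: merge_def configs_iff)
        qed
        show "b = b'"
        proof
          fix i have e: "merge P a b i = merge P a' b' i" using h(5) by simp
          show "b i = b' i" using h(2,4) e assms(3)
            by (cases "i \<in> P") (auto simp: merge_def configs_iff)
        qed
      qed
    qed
    show "(\<lambda>(a, b). merge P a b) ` (configs P \<times> configs Q) = configs (P \<union> Q)"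
    proof
      show "(\<lambda>(a, b). merge P a b) ` (configs P \<times> configs Q) \<subseteq> configs (P \<union> Q)"
        by (auto intro: merge_configs)
      show "configs (P \<union> Q) \<subseteq> (\<lambda>(a, b). merge P a b) ` (configs P \<times> configs Q)"
      proof
        fix \<mu> assume m: "\<mu> \<in> configs (P \<union> Q)"
        have "\<mu> = merge P (restr P \<mu>) (restr Q \<mu>)"
          using m by (auto simp: merge_def restr_def configs_iff fun_eq_iff)
        then show "\<mu> \<in> (\<lambda>(a, b). merge P a b) ` (configs P \<times> configs Q)"
          by (intro rev_image_eqI[where x="(restr P \<mu>, restr Q \<mu>)"]) auto
      qed
    qed
  qed
  have "(\<Sum>\<mu>\<in>configs (P \<union> Q). f \<mu>) = (\<Sum>x\<in>configs P \<times> configs Q. f ((\<lambda>(a, b). merge P a b) x))"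
    using sum.reindex_bij_betw[OF bij, of f] by simp
  also have "\<dots> = (\<Sum>a\<in>configs P. \<Sum>b\<in>configs Q. f (merge P a b))"
    by (simp add: sum.cartesian_product case_prod_unfold)
  finally show ?thesis .
qed

lemma sum_agr:
  assumes "finite Lam" "S \<subseteq> Lam" "\<sigma> \<in> configs Lam"
  shows "(\<Sum>\<mu>\<in>configs Lam. if agr S \<mu> \<sigma> then f \<mu> else 0) = (\<Sum>a\<in>configs S. f (merge S a \<sigma>))"
proof -
  have fin: "finite (configs Lam)" using assms finite_configs by blast
  have eq: "{\<mu> \<in> configs Lam. agr S \<mu> \<sigma>} = (\<lambda>a. merge S a \<sigma>) ` configs S"
  proof
    show "{\<mu> \<in> configs Lam. agr S \<mu> \<sigma>} \<subseteq> (\<lambda>a. merge S a \<sigma>) ` configs S"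
    proof
      fix \<mu> assume m: "\<mu> \<in> {\<mu> \<in> configs Lam. agr S \<mu> \<sigma>}"
      then have "\<mu> = merge S (restr S \<mu>) \<sigma>"
        by (auto simp: merge_def restr_def agr_def fun_eq_iff)
      then show "\<mu> \<in> (\<lambda>a. merge S a \<sigma>) ` configs S" by force
    qed
    show "(\<lambda>a. merge S a \<sigma>) ` configs S \<subseteq> {\<mu> \<in> configs Lam. agr S \<mu> \<sigma>}"
    proof
      fix x assume "x \<in> (\<lambda>a. merge S a \<sigma>) ` configs S"
      then obtain a where a: "a \<in> configs S" "x = merge S a \<sigma>" by blast
      have "merge S a \<sigma> \<in> configs Lam" using merge_configs2[OF a(1) assms(3,2)] .
      moreover have "agr S (merge S a \<sigma>) \<sigma>" by (simp add: agr_def merge_def)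
      ultimately show "x \<in> {\<mu> \<in> configs Lam. agr S \<mu> \<sigma>}" using a by simp
    qed
  qed
  have inj: "inj_on (\<lambda>a. merge S a \<sigma>) (configs S)"
  proof (rule inj_onI)
    fix a b assume "a \<in> configs S" "b \<in> configs S" "merge S a \<sigma> = merge S b \<sigma>"
    then show "a = b" by (metis restr_merge_same)
  qed
  have "(\<Sum>\<mu>\<in>configs Lam. if agr S \<mu> \<sigma> then f \<mu> else 0) = (\<Sum>\<mu>\<in>{\<mu> \<in> configs Lam. agr S \<mu> \<sigma>}. f \<mu>)"
    using sum.inter_filter[OF fin] by metis
  also have "\<dots> = (\<Sum>a\<in>configs S. f (merge S a \<sigma>))"
    unfolding eq using sum.reindex[OF inj] by simp
  finally show ?thesis .
qed

lemma restr_restr: "restr S (restr T \<sigma>) = restr (S \<inter> T) \<sigma>"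
  by (auto simp: restr_def fun_eq_iff)

lemma restr_idem[simp]: "restr S (restr S \<sigma>) = restr S \<sigma>"
  by (auto simp: restr_def fun_eq_iff)

lemma agr_restr[simp]: "agr S (restr S \<sigma>) (restr S \<tau>) \<longleftrightarrow> True"
  by (auto simp: agr_def restr_def)

lemma acts_within_loc: "acts_within Lam S h \<longleftrightarrow> loc Lam S h"
proof
  assume "acts_within Lam S h"
  then obtain U where U: "\<forall>\<sigma>\<in>configs Lam. \<forall>\<tau>\<in>configs Lam. h \<sigma> \<tau> = ext_op Lam S U \<sigma> \<tau>"
    unfolding acts_within_def by blast
  show "loc Lam S h" unfolding loc_def
  proof (intro ballI)
    fix \<sigma> \<tau> assume s: "\<sigma> \<in> configs Lam" "\<tau> \<in> configs Lam"
    have r: "restr S \<sigma> \<in> configs Lam" "restr S \<tau> \<in> configs Lam" using s restr_configs2 by auto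
    have "h (restr S \<sigma>) (restr S \<tau>) = U (restr S \<sigma>) (restr S \<tau>)"
      using U r by (simp add: ext_op_def restr_restr agr_def[symmetric])
    moreover have "h \<sigma> \<tau> = (if agr S \<sigma> \<tau> then U (restr S \<sigma>) (restr S \<tau>) else 0)"
      using U s by (simp add: ext_op_def agr_def)
    ultimately show "h \<sigma> \<tau> = (if agr S \<sigma> \<tau> then h (restr S \<sigma>) (restr S \<tau>) else 0)"
      by simp
  qed
next
  assume "loc Lam S h"
  then show "acts_within Lam S h" unfolding acts_within_def loc_def
    by (intro exI[of _ h]) (auto simp: ext_op_def agr_def)
qed

lemma ext_op_loc: "loc Lam S (ext_op Lam S U)"
proof -
  have "acts_within Lam S (ext_op Lam S U)" unfolding acts_within_def by blast
  then show ?thesis by (simp add: acts_within_loc)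
qed

lemma locD: "loc Lam S h \<Longrightarrow> \<sigma> \<in> configs Lam \<Longrightarrow> \<tau> \<in> configs Lam \<Longrightarrow>
   h \<sigma> \<tau> = (if agr S \<sigma> \<tau> then h (restr S \<sigma>) (restr S \<tau>) else 0)"
  unfolding loc_def by blast

lemma loc_zero: assumes "loc Lam S h" "\<sigma> \<in> configs Lam" "\<tau> \<in> configs Lam" "\<not> agr S \<sigma> \<tau>"
  shows "h \<sigma> \<tau> = 0"
  using locD[OF assms(1-3)] assms(4) by simp

lemma loc_cong: "loc Lam S h \<Longrightarrow> (\<And>\<sigma> \<tau>. \<sigma> \<in> configs Lam \<Longrightarrow> \<tau> \<in> configs Lam \<Longrightarrow> h \<sigma> \<tau> = h' \<sigma> \<tau>) \<Longrightarrow> loc Lam S h'"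
  unfolding loc_def
proof (intro ballI)
  fix \<sigma> \<tau> assume l: "\<forall>\<sigma>\<in>configs Lam. \<forall>\<tau>\<in>configs Lam. h \<sigma> \<tau> = (if agr S \<sigma> \<tau> then h (restr S \<sigma>) (restr S \<tau>) else 0)"
    and e: "\<And>\<sigma> \<tau>. \<sigma> \<in> configs Lam \<Longrightarrow> \<tau> \<in> configs Lam \<Longrightarrow> h \<sigma> \<tau> = h' \<sigma> \<tau>"
    and s: "\<sigma> \<in> configs Lam" "\<tau> \<in> configs Lam"
  have r: "restr S \<sigma> \<in> configs Lam" "restr S \<tau> \<in> configs Lam" using s restr_configs2 by auto
  show "h' \<sigma> \<tau> = (if agr S \<sigma> \<tau> then h' (restr S \<sigma>) (restr S \<tau>) else 0)"
  proof -
    have "h \<sigma> \<tau> = (if agr S \<sigma> \<tau> then h (restr S \<sigma>) (restr S \<tau>) else 0)" using l s by blast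
    then show ?thesis using e[OF s] e[OF r] by simp
  qed
qed

lemma loc_mono:
  assumes "loc Lam S h" "S \<subseteq> S'"
  shows "loc Lam S' h"
  unfolding loc_def
proof (intro ballI)
  fix \<sigma> \<tau> assume s: "\<sigma> \<in> configs Lam" "\<tau> \<in> configs Lam"
  have r: "restr S' \<sigma> \<in> configs Lam" "restr S' \<tau> \<in> configs Lam" using s restr_configs2 by auto
  show "h \<sigma> \<tau> = (if agr S' \<sigma> \<tau> then h (restr S' \<sigma>) (restr S' \<tau>) else 0)"
  proof (cases "agr S \<sigma> \<tau>")
    case True
    then have a1: "agr S' \<sigma> \<tau>" "agr S (restr S' \<sigma>) (restr S' \<tau>)"
      using assms(2) by (auto simp: agr_def restr_def)
    have "restr S (restr S' \<sigma>) = restr S \<sigma>" "restr S (restr S' \<tau>) = restr S \<tau>"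
      using assms(2) by (auto simp: restr_restr Int_absorb2)
    then show ?thesis using locD[OF assms(1) s] locD[OF assms(1) r] a1 True by simp
  next
    case False
    then have "\<not> agr S (restr S' \<sigma>) (restr S' \<tau>) \<or> \<not> agr S' \<sigma> \<tau>"
      unfolding agr_def restr_def by blast
    moreover have "h \<sigma> \<tau> = 0" using loc_zero[OF assms(1) s] False by blast
    moreover have "agr S' \<sigma> \<tau> \<Longrightarrow> h (restr S' \<sigma>) (restr S' \<tau>) = 0"
      using loc_zero[OF assms(1) r] calculation(1) by blast
    ultimately show ?thesis by simp
  qed
qed

lemma loc_inter:
  assumes "loc Lam S h" "loc Lam T h"
  shows "loc Lam (S \<inter> T) h"
  unfolding loc_def
proof (intro ballI)
  fix \<sigma> \<tau> assume s: "\<sigma> \<in> configs Lam" "\<tau> \<in> configs Lam"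
  show "h \<sigma> \<tau> = (if agr (S \<inter> T) \<sigma> \<tau> then h (restr (S \<inter> T) \<sigma>) (restr (S \<inter> T) \<tau>) else 0)"
  proof (cases "agr (S \<inter> T) \<sigma> \<tau>")
    case True
    then have a: "agr S \<sigma> \<tau>" by (auto simp: agr_def)
    have r: "restr S \<sigma> \<in> configs Lam" "restr S \<tau> \<in> configs Lam" using s restr_configs2 by auto
    have b: "agr T (restr S \<sigma>) (restr S \<tau>)" using True by (auto simp: agr_def restr_def)
    have "h \<sigma> \<tau> = h (restr S \<sigma>) (restr S \<tau>)" using locD[OF assms(1) s] a by simp
    also have "\<dots> = h (restr T (restr S \<sigma>)) (restr T (restr S \<tau>))" using locD[OF assms(2) r] b by simp
    also have "\<dots> = h (restr (S \<inter> T) \<sigma>) (restr (S \<inter> T) \<tau>)" by (simp add: restr_restr Int_commute)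
    finally show ?thesis using True by simp
  next
    case False
    then have "\<not> agr S \<sigma> \<tau> \<or> \<not> agr T \<sigma> \<tau>" unfolding agr_def by blast
    then have "h \<sigma> \<tau> = 0" using loc_zero[OF assms(1) s] loc_zero[OF assms(2) s] by blast
    then show ?thesis using False by simp
  qed
qed

lemma loc_Lam: "loc Lam Lam h"
  unfolding loc_def
proof (intro ballI)
  fix \<sigma> \<tau> assume "\<sigma> \<in> configs Lam" "\<tau> \<in> configs Lam"
  moreover then have "agr Lam \<sigma> \<tau>" by (simp add: agr_def configs_def)
  ultimately show "h \<sigma> \<tau> = (if agr Lam \<sigma> \<tau> then h (restr Lam \<sigma>) (restr Lam \<tau>) else 0)"
    by (simp add: restr_id)
qed

lemma Inter_closed:
  assumes "finite G" "G \<noteq> {}" "G \<subseteq> F" "\<And>x y. x \<in> F \<Longrightarrow> y \<in> F \<Longrightarrow> x \<inter> y \<in> F"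
  shows "\<Inter>G \<in> F"
  using assms(1,2,3)
proof (induction G rule: finite_ne_induct)
  case (singleton x) then show ?case by simp
next
  case (insert x G)
  then have "\<Inter>G \<in> F" "x \<in> F" by auto
  then show ?case using assms(4)[of x "\<Inter>G"] by simp
qed

lemma op_supp_loc:
  assumes "finite Lam"
  shows "loc Lam (op_supp Lam h) h"
proof -
  let ?F = "{S. S \<subseteq> Lam \<and> acts_within Lam S h}"
  have "?F \<subseteq> Pow Lam" by blast
  then have "finite ?F" using assms by (meson finite_Pow_iff finite_subset)
  moreover have "Lam \<in> ?F" using loc_Lam[of Lam h] by (simp add: acts_within_loc)
  then have "?F \<noteq> {}" by blast
  moreover have "\<And>x y. x \<in> ?F \<Longrightarrow> y \<in> ?F \<Longrightarrow> x \<inter> y \<in> ?F"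
  proof -
    fix x y assume "x \<in> ?F" "y \<in> ?F"
    then have "x \<subseteq> Lam" "loc Lam x h" "loc Lam y h" by (simp_all add: acts_within_loc)
    then show "x \<inter> y \<in> ?F" using loc_inter[of Lam x h y] by (simp add: acts_within_loc le_infI1)
  qed
  ultimately have "\<Inter>?F \<in> ?F" by (intro Inter_closed) auto
  then have "loc Lam (\<Inter>?F) h" by (simp add: acts_within_loc)
  then show ?thesis unfolding op_supp_def .
qed

lemma op_supp_le: "loc Lam S h \<Longrightarrow> S \<subseteq> Lam \<Longrightarrow> op_supp Lam h \<subseteq> S"
  unfolding op_supp_def by (rule Inter_lower) (simp add: acts_within_loc)

lemma op_supp_sub: "op_supp Lam h \<subseteq> Lam"
  unfolding op_supp_def by (rule Inter_lower) (simp add: acts_within_loc loc_Lam)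

lemma sum_single_nz:
  assumes "finite A" "a \<in> A" "\<And>x. x \<in> A \<Longrightarrow> x \<noteq> a \<Longrightarrow> g x = 0"
  shows "sum g A = g a"
proof -
  have "sum g A = sum g {a}" using assms by (intro sum.mono_neutral_right) auto
  then show ?thesis by simp
qed

lemma op_mult_assoc:
  assumes "finite Y"
  shows "op_mult Y (op_mult Y P Q) R = op_mult Y P (op_mult Y Q R)"
  unfolding op_mult_def
  by (auto simp: fun_eq_iff sum_distrib_left sum_distrib_right mult.assoc intro: sum.swap)

lemma op_adj_mult: "op_adj (op_mult Y P Q) = op_mult Y (op_adj Q) (op_adj P)"
  unfolding op_mult_def op_adj_def by (auto simp: fun_eq_iff mult.commute)

lemma op_adj_adj[simp]: "op_adj (op_adj P) = P"
  unfolding op_adj_def by (auto simp: fun_eq_iff)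

lemma op_adj_id[simp]: "op_adj (op_id Y) = op_id Y"
  unfolding op_adj_def op_id_def by (intro ext) auto

lemma op_adj_ext: "op_adj (ext_op Lam g V) = ext_op Lam g (op_adj V)"
  unfolding op_adj_def ext_op_def by (auto simp: fun_eq_iff)

lemma ext_op_eq: "\<sigma> \<in> configs Lam \<Longrightarrow> \<tau> \<in> configs Lam \<Longrightarrow>
  ext_op Lam g V \<sigma> \<tau> = (if agr g \<sigma> \<tau> then V (restr g \<sigma>) (restr g \<tau>) else 0)"
  by (simp add: ext_op_def agr_def)

lemma op_id_left: "finite Y \<Longrightarrow> \<sigma> \<in> configs Y \<Longrightarrow> op_mult Y (op_id Y) P \<sigma> \<tau> = P \<sigma> \<tau>"
  unfolding op_mult_def op_id_def
  by (subst sum_single_nz[where a=\<sigma>]) (auto intro: finite_configs)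

definition hconj :: "'s set \<Rightarrow> 's qop \<Rightarrow> 's qop \<Rightarrow> 's qop" where
  "hconj Y W Ob = op_mult Y (op_mult Y (op_adj W) Ob) W"

definition sconj :: "'s set \<Rightarrow> 's qop \<Rightarrow> 's qop \<Rightarrow> 's qop" where
  "sconj Y W Ob = op_mult Y (op_mult Y W Ob) (op_adj W)"

lemma sconj_hconj: "sconj Y W Ob = hconj Y (op_adj W) Ob"
  unfolding sconj_def hconj_def by simp

lemma hconj_mult:
  assumes "finite Y"
  shows "hconj Y (op_mult Y P Q) Ob = hconj Y Q (hconj Y P Ob)"
  unfolding hconj_def op_adj_mult by (simp add: op_mult_assoc[OF assms])

lemma sconj_mult:
  assumes "finite Y"
  shows "sconj Y (op_mult Y P Q) Ob = sconj Y P (sconj Y Q Ob)"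
  unfolding sconj_def op_adj_mult by (simp add: op_mult_assoc[OF assms])

lemma op_mult_cong_mid:
  assumes "\<And>\<mu>. \<mu> \<in> configs Y \<Longrightarrow> P \<sigma> \<mu> = P' \<sigma> \<mu>" "\<And>\<mu>. \<mu> \<in> configs Y \<Longrightarrow> Q \<mu> \<tau> = Q' \<mu> \<tau>"
  shows "op_mult Y P Q \<sigma> \<tau> = op_mult Y P' Q' \<sigma> \<tau>"
  unfolding op_mult_def using assms by (intro sum.cong) auto

lemma hconj_cong:
  assumes "\<And>\<sigma> \<tau>. \<sigma> \<in> configs Y \<Longrightarrow> \<tau> \<in> configs Y \<Longrightarrow> Ob \<sigma> \<tau> = Ob' \<sigma> \<tau>"
  shows "hconj Y W Ob = hconj Y W Ob'"
  unfolding hconj_def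
  by (auto simp: fun_eq_iff intro!: op_mult_cong_mid) (auto simp: op_mult_def assms intro!: sum.cong)

lemma op_id_right: "finite Y \<Longrightarrow> \<tau> \<in> configs Y \<Longrightarrow> op_mult Y P (op_id Y) \<sigma> \<tau> = P \<sigma> \<tau>"
  unfolding op_mult_def op_id_def
  by (subst sum_single_nz[where a=\<tau>]) (auto intro: finite_configs)

lemma hconj_id:
  assumes "finite Y" "\<sigma> \<in> configs Y" "\<tau> \<in> configs Y"
  shows "hconj Y (op_id Y) Ob \<sigma> \<tau> = Ob \<sigma> \<tau>"
  unfolding hconj_def op_adj_id using assms by (simp add: op_id_right op_id_left)

lemma gate_formula:
  assumes fin: "finite Lam" and g: "g \<subseteq> Lam" and s: "\<sigma> \<in> configs Lam" "\<tau> \<in> configs Lam"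
  shows "hconj Lam (ext_op Lam g V) Ob \<sigma> \<tau> =
    (\<Sum>a\<in>configs g. \<Sum>c\<in>configs g. cnj (V a (restr g \<sigma>)) * Ob (merge g a \<sigma>) (merge g c \<tau>) * V c (restr g \<tau>))"
proof -
  let ?G = "ext_op Lam g V"
  have inner: "op_mult Lam (op_adj ?G) Ob \<sigma> \<beta> = (\<Sum>a\<in>configs g. cnj (V a (restr g \<sigma>)) * Ob (merge g a \<sigma>) \<beta>)" for \<beta>
  proof -
    have "op_mult Lam (op_adj ?G) Ob \<sigma> \<beta> =
       (\<Sum>\<alpha>\<in>configs Lam. if agr g \<alpha> \<sigma> then cnj (V (restr g \<alpha>) (restr g \<sigma>)) * Ob \<alpha> \<beta> else 0)"
      unfolding op_mult_def op_adj_def by (intro sum.cong refl) (simp add: ext_op_eq[OF _ s(1)])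
    also have "\<dots> = (\<Sum>a\<in>configs g. cnj (V (restr g (merge g a \<sigma>)) (restr g \<sigma>)) * Ob (merge g a \<sigma>) \<beta>)"
      by (rule sum_agr[OF fin g s(1)])
    also have "\<dots> = (\<Sum>a\<in>configs g. cnj (V a (restr g \<sigma>)) * Ob (merge g a \<sigma>) \<beta>)"
      by (intro sum.cong refl) (simp add: restr_merge_same)
    finally show ?thesis .
  qed
  have "hconj Lam ?G Ob \<sigma> \<tau> = (\<Sum>\<beta>\<in>configs Lam. op_mult Lam (op_adj ?G) Ob \<sigma> \<beta> * ?G \<beta> \<tau>)"
    unfolding hconj_def op_mult_def[of Lam "op_mult Lam (op_adj ?G) Ob"] by simp
  also have "\<dots> = (\<Sum>\<beta>\<in>configs Lam. if agr g \<beta> \<tau> then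
        (\<Sum>a\<in>configs g. cnj (V a (restr g \<sigma>)) * Ob (merge g a \<sigma>) \<beta>) * V (restr g \<beta>) (restr g \<tau>) else 0)"
    by (intro sum.cong refl) (simp add: inner ext_op_eq[OF _ s(2)])
  also have "\<dots> = (\<Sum>c\<in>configs g. (\<Sum>a\<in>configs g. cnj (V a (restr g \<sigma>)) * Ob (merge g a \<sigma>) (merge g c \<tau>))
        * V (restr g (merge g c \<tau>)) (restr g \<tau>))"
    by (rule sum_agr[OF fin g s(2)])
  also have "\<dots> = (\<Sum>c\<in>configs g. \<Sum>a\<in>configs g. cnj (V a (restr g \<sigma>)) * Ob (merge g a \<sigma>) (merge g c \<tau>) * V c (restr g \<tau>))"
    by (intro sum.cong refl) (simp add: restr_merge_same sum_distrib_right)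
  also have "\<dots> = (\<Sum>a\<in>configs g. \<Sum>c\<in>configs g. cnj (V a (restr g \<sigma>)) * Ob (merge g a \<sigma>) (merge g c \<tau>) * V c (restr g \<tau>))"
    by (rule sum.swap)
  finally show ?thesis .
qed

lemma loc_eqI:
  assumes l: "loc Lam T Ob" and c: "x \<in> configs Lam" "y \<in> configs Lam" "x' \<in> configs Lam" "y' \<in> configs Lam"
    and e: "agr T x y \<longleftrightarrow> agr T x' y'" "restr T x = restr T x'" "restr T y = restr T y'"
  shows "Ob x y = Ob x' y'"
proof -
  have e1: "Ob x y = (if agr T x y then Ob (restr T x) (restr T y) else 0)" by (rule locD[OF l c(1,2)])
  have e2: "Ob x' y' = (if agr T x' y' then Ob (restr T x') (restr T y') else 0)" by (rule locD[OF l c(3,4)])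
  show ?thesis unfolding e1 e2 e by simp
qed

lemma gate_loc1:
  assumes fin: "finite Lam" and g: "g \<subseteq> Lam" and l: "loc Lam T Ob"
  shows "loc Lam (T \<union> g) (hconj Lam (ext_op Lam g V) Ob)"
  unfolding loc_def
proof (intro ballI)
  fix \<sigma> \<tau> assume s: "\<sigma> \<in> configs Lam" "\<tau> \<in> configs Lam"
  let ?s = "restr (T \<union> g) \<sigma>" and ?t = "restr (T \<union> g) \<tau>"
  have r: "?s \<in> configs Lam" "?t \<in> configs Lam" using s restr_configs2 by auto
  show "hconj Lam (ext_op Lam g V) Ob \<sigma> \<tau> =
    (if agr (T \<union> g) \<sigma> \<tau> then hconj Lam (ext_op Lam g V) Ob ?s ?t else 0)"
  proof (cases "agr (T \<union> g) \<sigma> \<tau>")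
    case True
    have "hconj Lam (ext_op Lam g V) Ob \<sigma> \<tau> =
      (\<Sum>a\<in>configs g. \<Sum>c\<in>configs g. cnj (V a (restr g \<sigma>)) * Ob (merge g a \<sigma>) (merge g c \<tau>) * V c (restr g \<tau>))"
      by (rule gate_formula[OF fin g s])
    also have "\<dots> = (\<Sum>a\<in>configs g. \<Sum>c\<in>configs g. cnj (V a (restr g ?s)) * Ob (merge g a ?s) (merge g c ?t) * V c (restr g ?t))"
    proof (intro sum.cong refl)
      fix a c assume a: "a \<in> configs g" and c: "c \<in> configs g"
      have rs: "restr g ?s = restr g \<sigma>" "restr g ?t = restr g \<tau>" by (auto simp: restr_def fun_eq_iff)
      have "Ob (merge g a \<sigma>) (merge g c \<tau>) = Ob (merge g a ?s) (merge g c ?t)"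
      proof (rule loc_eqI[OF l])
        show "merge g a \<sigma> \<in> configs Lam" "merge g c \<tau> \<in> configs Lam"
          "merge g a ?s \<in> configs Lam" "merge g c ?t \<in> configs Lam"
          using a c s r g by (auto intro: merge_configs2)
        show "agr T (merge g a \<sigma>) (merge g c \<tau>) = agr T (merge g a ?s) (merge g c ?t)"
          using True by (auto simp: agr_def merge_def restr_def)
        show "restr T (merge g a \<sigma>) = restr T (merge g a ?s)" "restr T (merge g c \<tau>) = restr T (merge g c ?t)"
          by (auto simp: merge_def restr_def fun_eq_iff)
      qed
      then show "cnj (V a (restr g \<sigma>)) * Ob (merge g a \<sigma>) (merge g c \<tau>) * V c (restr g \<tau>) =
          cnj (V a (restr g ?s)) * Ob (merge g a ?s) (merge g c ?t) * V c (restr g ?t)"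
        using rs by simp
    qed
    also have "\<dots> = hconj Lam (ext_op Lam g V) Ob ?s ?t"
      by (rule gate_formula[OF fin g r, symmetric])
    finally show ?thesis using True by simp
  next
    case False
    then obtain k where k: "k \<notin> T" "k \<notin> g" "\<sigma> k \<noteq> \<tau> k" by (auto simp: agr_def)
    have "hconj Lam (ext_op Lam g V) Ob \<sigma> \<tau> =
      (\<Sum>a\<in>configs g. \<Sum>c\<in>configs g. cnj (V a (restr g \<sigma>)) * Ob (merge g a \<sigma>) (merge g c \<tau>) * V c (restr g \<tau>))"
      by (rule gate_formula[OF fin g s])
    also have "\<dots> = 0"
    proof (intro sum.neutral ballI)
      fix a c assume a: "a \<in> configs g" and c: "c \<in> configs g"
      have "Ob (merge g a \<sigma>) (merge g c \<tau>) = 0"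
      proof (rule loc_zero[OF l])
        show "merge g a \<sigma> \<in> configs Lam" "merge g c \<tau> \<in> configs Lam"
          using a c s g by (auto intro: merge_configs2)
        show "\<not> agr T (merge g a \<sigma>) (merge g c \<tau>)" using k by (auto simp: agr_def merge_def)
      qed
      then show "cnj (V a (restr g \<sigma>)) * Ob (merge g a \<sigma>) (merge g c \<tau>) * V c (restr g \<tau>) = 0" by simp
    qed
    finally show ?thesis using False by simp
  qed
qed

lemma agr_split: "g \<inter> T = {} \<Longrightarrow> agr T \<sigma> \<tau> \<longleftrightarrow> (restr g \<sigma> = restr g \<tau> \<and> agr (T \<union> g) \<sigma> \<tau>)"
  unfolding agr_def restr_def fun_eq_iff by blast

lemma gate_loc2_val:
  assumes fin: "finite Lam" and g: "g \<subseteq> Lam" and l: "loc Lam T Ob" and dis: "g \<inter> T = {}"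
    and u: "unitary_on g V" and s: "\<sigma> \<in> configs Lam" "\<tau> \<in> configs Lam"
  shows "hconj Lam (ext_op Lam g V) Ob \<sigma> \<tau> = (if agr T \<sigma> \<tau> then Ob (restr T \<sigma>) (restr T \<tau>) else 0)"
proof -
  let ?W = "if agr (T \<union> g) \<sigma> \<tau> then Ob (restr T \<sigma>) (restr T \<tau>) else 0"
  have fg: "finite (configs g)" using fin g finite_subset finite_configs by blast
  have z: "Ob (merge g a \<sigma>) (merge g c \<tau>) = 0" if a: "a \<in> configs g" and c: "c \<in> configs g" and ne: "c \<noteq> a" for a c
  proof (rule loc_zero[OF l])
    show "merge g a \<sigma> \<in> configs Lam" "merge g c \<tau> \<in> configs Lam"
      using a c s g by (auto intro: merge_configs2)
    obtain k where "a k \<noteq> c k" using ne by auto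
    moreover then have "k \<in> g" using a c by (auto simp: configs_iff)
    ultimately show "\<not> agr T (merge g a \<sigma>) (merge g c \<tau>)" using dis by (auto simp: agr_def merge_def)
  qed
  have d: "Ob (merge g a \<sigma>) (merge g a \<tau>) = ?W" if a: "a \<in> configs g" for a
  proof -
    have m: "merge g a \<sigma> \<in> configs Lam" "merge g a \<tau> \<in> configs Lam"
      using a s g by (auto intro: merge_configs2)
    have e1: "agr T (merge g a \<sigma>) (merge g a \<tau>) \<longleftrightarrow> agr (T \<union> g) \<sigma> \<tau>"
      by (auto simp: agr_def merge_def)
    have e2: "restr T (merge g a \<sigma>) = restr T \<sigma>" "restr T (merge g a \<tau>) = restr T \<tau>"
      using dis by (auto simp: restr_def merge_def fun_eq_iff)
    show ?thesis using locD[OF l m] e1 e2 by simp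
  qed
  have "hconj Lam (ext_op Lam g V) Ob \<sigma> \<tau> =
      (\<Sum>a\<in>configs g. \<Sum>c\<in>configs g. cnj (V a (restr g \<sigma>)) * Ob (merge g a \<sigma>) (merge g c \<tau>) * V c (restr g \<tau>))"
    by (rule gate_formula[OF fin g s])
  also have "\<dots> = (\<Sum>a\<in>configs g. cnj (V a (restr g \<sigma>)) * Ob (merge g a \<sigma>) (merge g a \<tau>) * V a (restr g \<tau>))"
  proof (intro sum.cong refl)
    fix a assume a: "a \<in> configs g"
    show "(\<Sum>c\<in>configs g. cnj (V a (restr g \<sigma>)) * Ob (merge g a \<sigma>) (merge g c \<tau>) * V c (restr g \<tau>)) =
        cnj (V a (restr g \<sigma>)) * Ob (merge g a \<sigma>) (merge g a \<tau>) * V a (restr g \<tau>)"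
      by (rule sum_single_nz[OF fg a]) (simp add: z[OF a])
  qed
  also have "\<dots> = (\<Sum>a\<in>configs g. cnj (V a (restr g \<sigma>)) * V a (restr g \<tau>)) * ?W"
    unfolding sum_distrib_right by (intro sum.cong refl) (simp add: d)
  also have "(\<Sum>a\<in>configs g. cnj (V a (restr g \<sigma>)) * V a (restr g \<tau>)) = op_id g (restr g \<sigma>) (restr g \<tau>)"
  proof -
    have "op_mult g (op_adj V) V (restr g \<sigma>) (restr g \<tau>) = op_id g (restr g \<sigma>) (restr g \<tau>)"
      using u unfolding unitary_on_def by simp
    then show ?thesis unfolding op_mult_def op_adj_def by simp
  qed
  also have "op_id g (restr g \<sigma>) (restr g \<tau>) * ?W = (if agr T \<sigma> \<tau> then Ob (restr T \<sigma>) (restr T \<tau>) else 0)"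
    using agr_split[OF dis, of \<sigma> \<tau>] by (simp add: op_id_def)
  finally show ?thesis .
qed

lemma gate_loc2:
  assumes fin: "finite Lam" and g: "g \<subseteq> Lam" and l: "loc Lam T Ob" and dis: "g \<inter> T = {}"
    and u: "unitary_on g V"
  shows "loc Lam T (hconj Lam (ext_op Lam g V) Ob)"
  unfolding loc_def
proof (intro ballI)
  fix \<sigma> \<tau> assume s: "\<sigma> \<in> configs Lam" "\<tau> \<in> configs Lam"
  have r: "restr T \<sigma> \<in> configs Lam" "restr T \<tau> \<in> configs Lam" using s restr_configs2 by auto
  show "hconj Lam (ext_op Lam g V) Ob \<sigma> \<tau> =
    (if agr T \<sigma> \<tau> then hconj Lam (ext_op Lam g V) Ob (restr T \<sigma>) (restr T \<tau>) else 0)"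
    unfolding gate_loc2_val[OF assms s] gate_loc2_val[OF assms r] by simp
qed

lemma gate_loc:
  assumes fin: "finite Lam" and g: "g \<subseteq> Lam" and l: "loc Lam T Ob" and u: "unitary_on g V"
  shows "loc Lam (if g \<inter> T = {} then T else T \<union> g) (hconj Lam (ext_op Lam g V) Ob)"
  using gate_loc1[OF fin g l] gate_loc2[OF fin g l _ u] by simp

lemma op_id_loc: "loc Lam {} (op_id Lam)"
  unfolding loc_def
proof (intro ballI)
  fix \<sigma> \<tau> assume s: "\<sigma> \<in> configs Lam" "\<tau> \<in> configs Lam"
  have "restr {} \<sigma> = (\<lambda>_. False)" "restr {} \<tau> = (\<lambda>_. False)" by (auto simp: restr_def)
  moreover have "agr {} \<sigma> \<tau> \<longleftrightarrow> \<sigma> = \<tau>" by (auto simp: agr_def fun_eq_iff)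
  ultimately show "op_id Lam \<sigma> \<tau> = (if agr {} \<sigma> \<tau> then op_id Lam (restr {} \<sigma>) (restr {} \<tau>) else 0)"
    using s by (simp add: op_id_def)
qed

lemma gate_unitary:
  assumes fin: "finite Lam" and g: "g \<subseteq> Lam" and u: "unitary_on g V" and s: "\<sigma> \<in> configs Lam" "\<tau> \<in> configs Lam"
  shows "hconj Lam (ext_op Lam g V) (op_id Lam) \<sigma> \<tau> = op_id Lam \<sigma> \<tau>"
  using gate_loc2_val[OF fin g op_id_loc _ u s] op_id_loc[of Lam] s unfolding loc_def by simp

lemma unitary_adj: "unitary_on Y U \<Longrightarrow> unitary_on Y (op_adj U)"
  unfolding unitary_on_def by simp

definition gop :: "site set \<Rightarrow> gate \<Rightarrow> site qop" where
  "gop Lam g = ext_op Lam (gate_sites g) (snd (snd g))"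

lemma layer_op_Nil: "layer_op Lam [] = op_id Lam"
  by (simp add: layer_op_def)

lemma layer_op_Cons: "layer_op Lam (g # gs) = op_mult Lam (gop Lam g) (layer_op Lam gs)"
  by (simp add: layer_op_def gop_def)

lemma circuit_op_Nil: "circuit_op Lam [] = op_id Lam"
  by (simp add: circuit_op_def)

lemma circuit_op_snoc: "circuit_op Lam (Ls @ [L]) = op_mult Lam (layer_op Lam L) (circuit_op Lam Ls)"
  by (simp add: circuit_op_def)

lemma valid_gateD:
  assumes "valid_gate Lam g"
  shows "gate_sites g \<subseteq> Lam" "unitary_on (gate_sites g) (snd (snd g))"
    "lat_adjacent (fst g) (fst (snd g))"
  using assms by (cases g; auto simp: valid_gate_def gate_sites_def)+

definition ldisj :: "gate list \<Rightarrow> bool" where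
  "ldisj gs \<longleftrightarrow> (\<forall>a<length gs. \<forall>b<length gs. a \<noteq> b \<longrightarrow> gate_sites (gs ! a) \<inter> gate_sites (gs ! b) = {})"

lemma ldisj_Cons:
  assumes "ldisj (g # gs)"
  shows "ldisj gs" "\<And>g'. g' \<in> set gs \<Longrightarrow> gate_sites g \<inter> gate_sites g' = {}"
proof -
  show "ldisj gs" using assms unfolding ldisj_def
    by (metis Suc_less_eq length_Cons nat.inject nth_Cons_Suc)
  fix g' assume "g' \<in> set gs"
  then obtain b where b: "b < length gs" "gs ! b = g'" by (auto simp: in_set_conv_nth)
  then show "gate_sites g \<inter> gate_sites g' = {}" using assms unfolding ldisj_def
    by (metis Suc_less_eq length_Cons nat.distinct(1) nth_Cons_0 nth_Cons_Suc zero_less_Suc)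
qed

definition grow :: "gate list \<Rightarrow> site set \<Rightarrow> site set" where
  "grow gs T = T \<union> \<Union>(gate_sites ` {g \<in> set gs. gate_sites g \<inter> T \<noteq> {}})"

lemma hconj_id_cong:
  assumes "finite Y"
  shows "loc Y T Ob \<Longrightarrow> loc Y T (hconj Y (op_id Y) Ob)"
  using hconj_id[OF assms] by (auto intro: loc_cong)

lemma layer_h:
  assumes fin: "finite Lam"
  shows "\<forall>g\<in>set gs. valid_gate Lam g \<Longrightarrow> ldisj gs \<Longrightarrow> loc Lam T Ob \<Longrightarrow>
    loc Lam (grow gs T) (hconj Lam (layer_op Lam gs) Ob)"
proof (induction gs arbitrary: T Ob)
  case Nil
  then show ?case unfolding layer_op_Nil grow_def
    using hconj_id[OF fin] by (auto intro: loc_cong)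
next
  case (Cons g gs)
  let ?T' = "if gate_sites g \<inter> T = {} then T else T \<union> gate_sites g"
  have vg: "valid_gate Lam g" using Cons.prems by simp
  have l1: "loc Lam ?T' (hconj Lam (gop Lam g) Ob)"
    unfolding gop_def by (rule gate_loc[OF fin valid_gateD(1)[OF vg] Cons.prems(3) valid_gateD(2)[OF vg]])
  have "loc Lam (grow gs ?T') (hconj Lam (layer_op Lam gs) (hconj Lam (gop Lam g) Ob))"
    using Cons.IH[OF _ ldisj_Cons(1)[OF Cons.prems(2)] l1] Cons.prems(1) by simp
  moreover have "grow gs ?T' \<subseteq> grow (g # gs) T"
    using ldisj_Cons(2)[OF Cons.prems(2)] unfolding grow_def by (auto split: if_splits)
  ultimately show ?case unfolding layer_op_Cons hconj_mult[OF fin] by (rule loc_mono)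
qed

lemma layer_s:
  assumes fin: "finite Lam"
  shows "\<forall>g\<in>set gs. valid_gate Lam g \<Longrightarrow> ldisj gs \<Longrightarrow> loc Lam T Ob \<Longrightarrow>
    loc Lam (grow gs T) (sconj Lam (layer_op Lam gs) Ob)"
proof (induction gs arbitrary: T Ob)
  case Nil
  then show ?case unfolding layer_op_Nil grow_def sconj_hconj op_adj_id
    using hconj_id[OF fin] by (auto intro: loc_cong)
next
  case (Cons g gs)
  let ?T1 = "grow gs T"
  let ?T' = "if gate_sites g \<inter> ?T1 = {} then ?T1 else ?T1 \<union> gate_sites g"
  have vg: "valid_gate Lam g" using Cons.prems by simp
  have l1: "loc Lam ?T1 (sconj Lam (layer_op Lam gs) Ob)"
    using Cons.IH[OF _ ldisj_Cons(1)[OF Cons.prems(2)] Cons.prems(3)] Cons.prems(1) by simp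
  have "loc Lam ?T' (sconj Lam (gop Lam g) (sconj Lam (layer_op Lam gs) Ob))"
    unfolding gop_def sconj_hconj[of Lam "ext_op _ _ _"] op_adj_ext
    by (rule gate_loc[OF fin valid_gateD(1)[OF vg] l1 unitary_adj[OF valid_gateD(2)[OF vg]]])
  moreover have "?T' \<subseteq> grow (g # gs) T"
    using ldisj_Cons(2)[OF Cons.prems(2)] unfolding grow_def by (auto split: if_splits)
  ultimately show ?case unfolding layer_op_Cons sconj_mult[OF fin] by (rule loc_mono)
qed

lemma layer_unitary:
  assumes fin: "finite Lam"
  shows "\<forall>g\<in>set gs. valid_gate Lam g \<Longrightarrow> \<sigma> \<in> configs Lam \<Longrightarrow> \<tau> \<in> configs Lam \<Longrightarrow>
    hconj Lam (layer_op Lam gs) (op_id Lam) \<sigma> \<tau> = op_id Lam \<sigma> \<tau> \<and>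
    sconj Lam (layer_op Lam gs) (op_id Lam) \<sigma> \<tau> = op_id Lam \<sigma> \<tau>"
proof (induction gs arbitrary: \<sigma> \<tau>)
  case Nil
  then show ?case unfolding layer_op_Nil sconj_hconj op_adj_id using hconj_id[OF fin] by simp
next
  case (Cons g gs)
  have vg: "valid_gate Lam g" using Cons.prems by simp
  have g1: "hconj Lam (gop Lam g) (op_id Lam) = hconj Lam (gop Lam g) (op_id Lam)" ..
  have e1: "hconj Lam (layer_op Lam gs) (hconj Lam (gop Lam g) (op_id Lam)) = hconj Lam (layer_op Lam gs) (op_id Lam)"
    by (rule hconj_cong) (simp add: gop_def gate_unitary[OF fin valid_gateD(1,2)[OF vg]])
  have e2: "hconj Lam (op_adj (gop Lam g)) (sconj Lam (layer_op Lam gs) (op_id Lam)) = hconj Lam (op_adj (gop Lam g)) (op_id Lam)"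
    by (rule hconj_cong) (use Cons.IH Cons.prems in simp)
  have e3: "sconj Lam (gop Lam g) (sconj Lam (layer_op Lam gs) (op_id Lam)) \<sigma> \<tau> = op_id Lam \<sigma> \<tau>"
    unfolding sconj_hconj[of Lam "gop Lam g"] e2
    unfolding gop_def op_adj_ext
    by (rule gate_unitary[OF fin valid_gateD(1)[OF vg] unitary_adj[OF valid_gateD(2)[OF vg]] Cons.prems(2,3)])
  show ?case
    unfolding layer_op_Cons hconj_mult[OF fin] sconj_mult[OF fin] e1
    using Cons.IH Cons.prems e3 by simp
qed

definition nbhd :: "site set \<Rightarrow> nat \<Rightarrow> site set \<Rightarrow> site set" where
  "nbhd Lam k T = {y \<in> Lam. \<exists>t\<in>T. \<exists>j\<le>k. (t, y) \<in> lat_edges Lam ^^ j}"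

lemma nbhd_sub: "nbhd Lam k T \<subseteq> Lam"
  by (auto simp: nbhd_def)

lemma nbhd_self: "T \<subseteq> Lam \<Longrightarrow> T \<subseteq> nbhd Lam k T"
  unfolding nbhd_def by (auto intro!: exI[of _ 0])

lemma nbhd_comp: "nbhd Lam k (nbhd Lam m T) \<subseteq> nbhd Lam (m + k) T"
proof
  fix y assume "y \<in> nbhd Lam k (nbhd Lam m T)"
  then obtain x j2 where y: "y \<in> Lam" "x \<in> nbhd Lam m T" "j2 \<le> k" "(x, y) \<in> lat_edges Lam ^^ j2"
    unfolding nbhd_def by blast
  then obtain t j1 where x: "t \<in> T" "j1 \<le> m" "(t, x) \<in> lat_edges Lam ^^ j1"
    unfolding nbhd_def by blast
  have "(t, y) \<in> lat_edges Lam ^^ (j1 + j2)" using x(3) y(4) by (auto simp: relpow_add)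
  then show "y \<in> nbhd Lam (m + k) T" unfolding nbhd_def using y x by (intro CollectI conjI bexI[of _ t] exI[of _ "j1 + j2"]) auto
qed

lemma lat_adjacent_sym: "lat_adjacent x y \<Longrightarrow> lat_adjacent y x"
  unfolding lat_adjacent_def by (metis (no_types, lifting) abs_minus_commute sum.cong)

lemma grow_nbhd:
  assumes "\<forall>g\<in>set gs. valid_gate Lam g" "T \<subseteq> Lam"
  shows "grow gs T \<subseteq> nbhd Lam 1 T"
proof
  fix x assume "x \<in> grow gs T"
  then consider "x \<in> T" | g where "g \<in> set gs" "gate_sites g \<inter> T \<noteq> {}" "x \<in> gate_sites g"
    unfolding grow_def by blast
  then show "x \<in> nbhd Lam 1 T"
  proof cases
    case 1 then show ?thesis using nbhd_self[OF assms(2)] by blast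
  next
    case 2
    then have vg: "valid_gate Lam g" using assms(1) by blast
    obtain i j U where gij: "g = (i, j, U)" by (cases g)
    have ij: "i \<in> Lam" "j \<in> Lam" "lat_adjacent i j" "lat_adjacent j i"
      using vg gij lat_adjacent_sym by (auto simp: valid_gate_def)
    obtain t where t: "t \<in> T" "t \<in> {i, j}" using 2 gij by (auto simp: gate_sites_def)
    have xs: "x \<in> {i, j}" using 2 gij by (simp add: gate_sites_def)
    show ?thesis
    proof (cases "x = t")
      case True then show ?thesis using t nbhd_self[OF assms(2)] by blast
    next
      case False
      then have "(t, x) \<in> lat_edges Lam" using t xs ij by (auto simp: lat_edges_def)
      then have "(t, x) \<in> lat_edges Lam ^^ 1" by simp
      then show ?thesis unfolding nbhd_def using t xs ij by blast
    qed
  qed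
qed

lemma valid_layerD: "valid_layer Lam L \<Longrightarrow> (\<forall>g\<in>set L. valid_gate Lam g) \<and> ldisj L"
  unfolding valid_layer_def ldisj_def by blast

lemma circuit_h:
  assumes fin: "finite Lam"
  shows "\<forall>L\<in>set Ls. valid_layer Lam L \<Longrightarrow> loc Lam T Ob \<Longrightarrow> T \<subseteq> Lam \<Longrightarrow>
    loc Lam (nbhd Lam (length Ls) T) (hconj Lam (circuit_op Lam Ls) Ob)"
proof (induction Ls arbitrary: T Ob rule: rev_induct)
  case Nil
  then have "loc Lam (nbhd Lam 0 T) Ob" using nbhd_self[of T Lam 0] by (auto intro: loc_mono)
  then show ?case unfolding circuit_op_Nil using hconj_id[OF fin] by (auto intro: loc_cong)
next
  case (snoc L Ls)
  have vl: "(\<forall>g\<in>set L. valid_gate Lam g) \<and> ldisj L" using snoc.prems(1) valid_layerD[of Lam L] by simp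
  have "loc Lam (grow L T) (hconj Lam (layer_op Lam L) Ob)"
    using layer_h[OF fin] vl snoc.prems(2) by blast
  then have l1: "loc Lam (nbhd Lam 1 T) (hconj Lam (layer_op Lam L) Ob)"
    using grow_nbhd[of L Lam T] vl snoc.prems(3) by (auto intro: loc_mono)
  have "loc Lam (nbhd Lam (length Ls) (nbhd Lam 1 T)) (hconj Lam (circuit_op Lam Ls) (hconj Lam (layer_op Lam L) Ob))"
    using snoc.IH[OF _ l1 nbhd_sub] snoc.prems(1) by simp
  moreover have "nbhd Lam (length Ls) (nbhd Lam 1 T) \<subseteq> nbhd Lam (length (Ls @ [L])) T"
    using nbhd_comp[of Lam "length Ls" 1 T] by simp
  ultimately show ?case unfolding circuit_op_snoc hconj_mult[OF fin] by (rule loc_mono)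
qed

lemma circuit_s:
  assumes fin: "finite Lam"
  shows "\<forall>L\<in>set Ls. valid_layer Lam L \<Longrightarrow> loc Lam T Ob \<Longrightarrow> T \<subseteq> Lam \<Longrightarrow>
    loc Lam (nbhd Lam (length Ls) T) (sconj Lam (circuit_op Lam Ls) Ob)"
proof (induction Ls arbitrary: T Ob rule: rev_induct)
  case Nil
  then have "loc Lam (nbhd Lam 0 T) Ob" using nbhd_self[of T Lam 0] by (auto intro: loc_mono)
  then show ?case unfolding circuit_op_Nil sconj_hconj op_adj_id using hconj_id[OF fin] by (auto intro: loc_cong)
next
  case (snoc L Ls)
  have vl: "(\<forall>g\<in>set L. valid_gate Lam g) \<and> ldisj L" using snoc.prems(1) valid_layerD[of Lam L] by simp
  have l1: "loc Lam (nbhd Lam (length Ls) T) (sconj Lam (circuit_op Lam Ls) Ob)"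
    using snoc.IH[OF _ snoc.prems(2,3)] snoc.prems(1) by simp
  have "loc Lam (grow L (nbhd Lam (length Ls) T)) (sconj Lam (layer_op Lam L) (sconj Lam (circuit_op Lam Ls) Ob))"
    using layer_s[OF fin] vl l1 by blast
  moreover have "grow L (nbhd Lam (length Ls) T) \<subseteq> nbhd Lam (length (Ls @ [L])) T"
    using grow_nbhd[of L Lam "nbhd Lam (length Ls) T"] vl nbhd_sub nbhd_comp[of Lam 1 "length Ls" T] by auto
  ultimately show ?case unfolding circuit_op_snoc sconj_mult[OF fin] by (rule loc_mono)
qed

lemma circuit_unitary:
  assumes fin: "finite Lam"
  shows "\<forall>L\<in>set Ls. valid_layer Lam L \<Longrightarrow> \<sigma> \<in> configs Lam \<Longrightarrow> \<tau> \<in> configs Lam \<Longrightarrow>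
    hconj Lam (circuit_op Lam Ls) (op_id Lam) \<sigma> \<tau> = op_id Lam \<sigma> \<tau> \<and>
    sconj Lam (circuit_op Lam Ls) (op_id Lam) \<sigma> \<tau> = op_id Lam \<sigma> \<tau>"
proof (induction Ls arbitrary: \<sigma> \<tau> rule: rev_induct)
  case Nil
  then show ?case unfolding circuit_op_Nil sconj_hconj op_adj_id using hconj_id[OF fin] by simp
next
  case (snoc L Ls)
  have vl: "\<forall>g\<in>set L. valid_gate Lam g" using snoc.prems(1) valid_layerD[of Lam L] by simp
  have e1: "hconj Lam (circuit_op Lam Ls) (hconj Lam (layer_op Lam L) (op_id Lam)) = hconj Lam (circuit_op Lam Ls) (op_id Lam)"
    by (rule hconj_cong) (use layer_unitary[OF fin vl] in simp)
  have e2: "sconj Lam (layer_op Lam L) (sconj Lam (circuit_op Lam Ls) (op_id Lam)) = sconj Lam (layer_op Lam L) (op_id Lam)"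
    unfolding sconj_hconj[of Lam "layer_op Lam L"]
    by (rule hconj_cong) (use snoc.IH snoc.prems in simp)
  show ?case
    unfolding circuit_op_snoc hconj_mult[OF fin] sconj_mult[OF fin] e1 e2
    using snoc.IH snoc.prems layer_unitary[OF fin vl] by simp
qed

lemma proj1_loc: "loc Lam {i} (proj1 Lam i)"
  unfolding loc_def
proof (intro ballI)
  fix \<sigma> \<tau> assume s: "\<sigma> \<in> configs Lam" "\<tau> \<in> configs Lam"
  have r: "restr {i} \<sigma> \<in> configs Lam" "restr {i} \<tau> \<in> configs Lam" using s restr_configs2 by auto
  show "proj1 Lam i \<sigma> \<tau> = (if agr {i} \<sigma> \<tau> then proj1 Lam i (restr {i} \<sigma>) (restr {i} \<tau>) else 0)"
  proof (cases "agr {i} \<sigma> \<tau>")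
    case True
    then have "\<sigma> = \<tau> \<longleftrightarrow> restr {i} \<sigma> = restr {i} \<tau>"
      unfolding agr_def restr_def fun_eq_iff by blast
    moreover have "restr {i} \<sigma> i = \<sigma> i" by (simp add: restr_def)
    ultimately show ?thesis using True s r by (simp add: proj1_def)
  next
    case False
    then have "\<sigma> \<noteq> \<tau>" by (auto simp: agr_def)
    then show ?thesis using False by (simp add: proj1_def)
  qed
qed

lemma parent_sconj: "parent_term Lam Ls i = sconj Lam (circuit_op Lam Ls) (proj1 Lam i)"
  unfolding parent_term_def sconj_def ..

lemma sconj_diag:
  assumes fin: "finite Lam" and s: "\<sigma> \<in> configs Lam" "\<tau> \<in> configs Lam"
    and D: "\<And>\<mu> \<nu>. \<mu> \<in> configs Lam \<Longrightarrow> \<nu> \<in> configs Lam \<Longrightarrow> Dg \<mu> \<nu> = (if \<mu> = \<nu> then d \<mu> else 0)"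
  shows "sconj Lam W Dg \<sigma> \<tau> = (\<Sum>\<mu>\<in>configs Lam. W \<sigma> \<mu> * d \<mu> * cnj (W \<tau> \<mu>))"
proof -
  have fc: "finite (configs Lam)" using fin finite_configs by blast
  have "sconj Lam W Dg \<sigma> \<tau> = (\<Sum>\<nu>\<in>configs Lam. (\<Sum>\<mu>\<in>configs Lam. W \<sigma> \<mu> * Dg \<mu> \<nu>) * cnj (W \<tau> \<nu>))"
    unfolding sconj_def op_mult_def op_adj_def ..
  also have "\<dots> = (\<Sum>\<nu>\<in>configs Lam. W \<sigma> \<nu> * d \<nu> * cnj (W \<tau> \<nu>))"
  proof (intro sum.cong refl)
    fix \<nu> assume n: "\<nu> \<in> configs Lam"
    have "(\<Sum>\<mu>\<in>configs Lam. W \<sigma> \<mu> * Dg \<mu> \<nu>) = W \<sigma> \<nu> * Dg \<nu> \<nu>"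
      by (rule sum_single_nz[OF fc n]) (simp add: D n)
    then show "(\<Sum>\<mu>\<in>configs Lam. W \<sigma> \<mu> * Dg \<mu> \<nu>) * cnj (W \<tau> \<nu>) = W \<sigma> \<nu> * d \<nu> * cnj (W \<tau> \<nu>)"
      using D[OF n n] by simp
  qed
  finally show ?thesis .
qed

definition Sset :: "site set \<Rightarrow> layer list \<Rightarrow> site set \<Rightarrow> site set" where
  "Sset Lam Ls Y = {i \<in> Lam. op_supp Lam (parent_term Lam Ls i) \<subseteq> Y}"

lemma H_formula:
  assumes fin: "finite Lam" and s: "\<sigma> \<in> configs Lam" "\<tau> \<in> configs Lam"
  shows "H_sub Lam Ls Y \<sigma> \<tau> = (\<Sum>\<mu>\<in>configs Lam. circuit_op Lam Ls \<sigma> \<mu> *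
      of_nat (card {i \<in> Sset Lam Ls Y. \<mu> i}) * cnj (circuit_op Lam Ls \<tau> \<mu>))"
proof -
  let ?C = "circuit_op Lam Ls" and ?S = "Sset Lam Ls Y"
  have fS: "finite ?S" using fin by (simp add: Sset_def)
  have "H_sub Lam Ls Y \<sigma> \<tau> = (\<Sum>i\<in>?S. \<Sum>\<mu>\<in>configs Lam. ?C \<sigma> \<mu> * (if \<mu> i then 1 else 0) * cnj (?C \<tau> \<mu>))"
    unfolding H_sub_def Sset_def[symmetric]
  proof (intro sum.cong refl)
    fix i
    show "parent_term Lam Ls i \<sigma> \<tau> = (\<Sum>\<mu>\<in>configs Lam. ?C \<sigma> \<mu> * (if \<mu> i then 1 else 0) * cnj (?C \<tau> \<mu>))"
      unfolding parent_sconj by (rule sconj_diag[OF fin s]) (simp add: proj1_def)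
  qed
  also have "\<dots> = (\<Sum>\<mu>\<in>configs Lam. \<Sum>i\<in>?S. ?C \<sigma> \<mu> * (if \<mu> i then 1 else 0) * cnj (?C \<tau> \<mu>))"
    by (rule sum.swap)
  also have "\<dots> = (\<Sum>\<mu>\<in>configs Lam. ?C \<sigma> \<mu> * of_nat (card {i \<in> ?S. \<mu> i}) * cnj (?C \<tau> \<mu>))"
  proof (intro sum.cong refl)
    fix \<mu>
    have "(\<Sum>i\<in>?S. (if \<mu> i then 1 else 0) :: complex) = of_nat (card {i \<in> ?S. \<mu> i})"
      using sum.inter_filter[OF fS, of "\<lambda>_. (1::complex)" "\<lambda>i. \<mu> i"] by simp
    moreover have "(\<Sum>i\<in>?S. ?C \<sigma> \<mu> * (if \<mu> i then 1 else 0) * cnj (?C \<tau> \<mu>)) =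
        ?C \<sigma> \<mu> * (\<Sum>i\<in>?S. (if \<mu> i then 1 else 0)) * cnj (?C \<tau> \<mu>)"
      by (simp only: sum_distrib_left sum_distrib_right)
    ultimately show "(\<Sum>i\<in>?S. ?C \<sigma> \<mu> * (if \<mu> i then 1 else 0) * cnj (?C \<tau> \<mu>)) =
        ?C \<sigma> \<mu> * of_nat (card {i \<in> ?S. \<mu> i}) * cnj (?C \<tau> \<mu>)"
      by simp
  qed
  finally show ?thesis .
qed

lemma unitary_sums:
  assumes fin: "finite Lam" and v: "\<forall>L\<in>set Ls. valid_layer Lam L" and s: "\<sigma> \<in> configs Lam" "\<tau> \<in> configs Lam"
  shows "(\<Sum>\<mu>\<in>configs Lam. circuit_op Lam Ls \<sigma> \<mu> * cnj (circuit_op Lam Ls \<tau> \<mu>)) = op_id Lam \<sigma> \<tau>"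
    "(\<Sum>\<mu>\<in>configs Lam. cnj (circuit_op Lam Ls \<mu> \<sigma>) * circuit_op Lam Ls \<mu> \<tau>) = op_id Lam \<sigma> \<tau>"
proof -
  let ?C = "circuit_op Lam Ls"
  have u: "hconj Lam ?C (op_id Lam) \<sigma> \<tau> = op_id Lam \<sigma> \<tau>" "sconj Lam ?C (op_id Lam) \<sigma> \<tau> = op_id Lam \<sigma> \<tau>"
    using circuit_unitary[OF fin v s] by auto
  have "sconj Lam ?C (op_id Lam) \<sigma> \<tau> = (\<Sum>\<mu>\<in>configs Lam. ?C \<sigma> \<mu> * 1 * cnj (?C \<tau> \<mu>))"
    by (rule sconj_diag[OF fin s]) (simp add: op_id_def)
  then show "(\<Sum>\<mu>\<in>configs Lam. ?C \<sigma> \<mu> * cnj (?C \<tau> \<mu>)) = op_id Lam \<sigma> \<tau>" using u by simp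
  have "hconj Lam ?C (op_id Lam) \<sigma> \<tau> = sconj Lam (op_adj ?C) (op_id Lam) \<sigma> \<tau>"
    by (simp add: sconj_hconj)
  also have "\<dots> = (\<Sum>\<mu>\<in>configs Lam. op_adj ?C \<sigma> \<mu> * 1 * cnj (op_adj ?C \<tau> \<mu>))"
    by (rule sconj_diag[OF fin s]) (simp add: op_id_def)
  finally show "(\<Sum>\<mu>\<in>configs Lam. cnj (?C \<mu> \<sigma>) * ?C \<mu> \<tau>) = op_id Lam \<sigma> \<tau>" using u by (simp add: op_adj_def)
qed

lemma exp_sums_c: "(\<lambda>k. (x::complex) ^ k / of_nat (fact k)) sums exp x"
proof -
  have "(\<lambda>k. x ^ k /\<^sub>R fact k) = (\<lambda>k. x ^ k / of_nat (fact k))"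
    by (simp add: fun_eq_iff scaleR_conv_of_real divide_inverse mult.commute)
  then show ?thesis using exp_converges[of x] by simp
qed

lemma pow_formula:
  assumes fin: "finite Lam" and v: "\<forall>L\<in>set Ls. valid_layer Lam L"
    and P: "\<And>\<sigma> \<tau>. \<sigma> \<in> configs Lam \<Longrightarrow> \<tau> \<in> configs Lam \<Longrightarrow>
       P \<sigma> \<tau> = (\<Sum>\<mu>\<in>configs Lam. circuit_op Lam Ls \<sigma> \<mu> * m \<mu> * cnj (circuit_op Lam Ls \<tau> \<mu>))"
    and s: "\<sigma> \<in> configs Lam"
  shows "\<tau> \<in> configs Lam \<Longrightarrow> op_pow Lam P k \<sigma> \<tau> =
     (\<Sum>\<mu>\<in>configs Lam. circuit_op Lam Ls \<sigma> \<mu> * m \<mu> ^ k * cnj (circuit_op Lam Ls \<tau> \<mu>))"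
proof (induction k arbitrary: \<tau>)
  case 0
  then show ?case using unitary_sums(1)[OF fin v s 0] by simp
next
  case (Suc k)
  let ?C = "circuit_op Lam Ls"
  let ?a = "\<lambda>\<mu>. ?C \<sigma> \<mu> * m \<mu> ^ k" and ?b = "\<lambda>\<mu>. m \<mu> * cnj (?C \<tau> \<mu>)"
  have fc: "finite (configs Lam)" using fin finite_configs by blast
  have "op_pow Lam P (Suc k) \<sigma> \<tau> = (\<Sum>\<nu>\<in>configs Lam. op_pow Lam P k \<sigma> \<nu> * P \<nu> \<tau>)"
    by (simp add: op_mult_def)
  also have "\<dots> = (\<Sum>\<nu>\<in>configs Lam. (\<Sum>\<mu>\<in>configs Lam. ?a \<mu> * cnj (?C \<nu> \<mu>)) * (\<Sum>\<mu>'\<in>configs Lam. ?C \<nu> \<mu>' * ?b \<mu>'))"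
    by (intro sum.cong refl) (simp add: Suc.IH P Suc.prems mult.assoc)
  also have "\<dots> = (\<Sum>\<nu>\<in>configs Lam. \<Sum>\<mu>\<in>configs Lam. \<Sum>\<mu>'\<in>configs Lam. ?a \<mu> * (cnj (?C \<nu> \<mu>) * ?C \<nu> \<mu>') * ?b \<mu>')"
    by (simp add: sum_product mult.assoc)
  also have "\<dots> = (\<Sum>\<mu>\<in>configs Lam. \<Sum>\<nu>\<in>configs Lam. \<Sum>\<mu>'\<in>configs Lam. ?a \<mu> * (cnj (?C \<nu> \<mu>) * ?C \<nu> \<mu>') * ?b \<mu>')"
    by (rule sum.swap)
  also have "\<dots> = (\<Sum>\<mu>\<in>configs Lam. \<Sum>\<mu>'\<in>configs Lam. \<Sum>\<nu>\<in>configs Lam. ?a \<mu> * (cnj (?C \<nu> \<mu>) * ?C \<nu> \<mu>') * ?b \<mu>')"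
    by (intro sum.cong refl sum.swap)
  also have "\<dots> = (\<Sum>\<mu>\<in>configs Lam. \<Sum>\<mu>'\<in>configs Lam. ?a \<mu> * op_id Lam \<mu> \<mu>' * ?b \<mu>')"
  proof (intro sum.cong refl)
    fix \<mu> \<mu>' assume "\<mu> \<in> configs Lam" "\<mu>' \<in> configs Lam"
    then have "(\<Sum>\<nu>\<in>configs Lam. cnj (?C \<nu> \<mu>) * ?C \<nu> \<mu>') = op_id Lam \<mu> \<mu>'"
      by (rule unitary_sums(2)[OF fin v])
    moreover have "(\<Sum>\<nu>\<in>configs Lam. ?a \<mu> * (cnj (?C \<nu> \<mu>) * ?C \<nu> \<mu>') * ?b \<mu>') =
       ?a \<mu> * (\<Sum>\<nu>\<in>configs Lam. cnj (?C \<nu> \<mu>) * ?C \<nu> \<mu>') * ?b \<mu>'"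
      by (simp only: sum_distrib_left sum_distrib_right)
    ultimately show "(\<Sum>\<nu>\<in>configs Lam. ?a \<mu> * (cnj (?C \<nu> \<mu>) * ?C \<nu> \<mu>') * ?b \<mu>') = ?a \<mu> * op_id Lam \<mu> \<mu>' * ?b \<mu>'"
      by simp
  qed
  also have "\<dots> = (\<Sum>\<mu>\<in>configs Lam. ?a \<mu> * ?b \<mu>)"
  proof (intro sum.cong refl)
    fix \<mu> assume m: "\<mu> \<in> configs Lam"
    show "(\<Sum>\<mu>'\<in>configs Lam. ?a \<mu> * op_id Lam \<mu> \<mu>' * ?b \<mu>') = ?a \<mu> * ?b \<mu>"
      by (subst sum_single_nz[OF fc m]) (auto simp: op_id_def m)
  qed
  also have "\<dots> = (\<Sum>\<mu>\<in>configs Lam. ?C \<sigma> \<mu> * m \<mu> ^ Suc k * cnj (?C \<tau> \<mu>))"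
    by (intro sum.cong refl) (simp add: mult_ac)
  finally show ?case .
qed

lemma exp_formula:
  assumes fin: "finite Lam" and v: "\<forall>L\<in>set Ls. valid_layer Lam L"
    and P: "\<And>\<sigma> \<tau>. \<sigma> \<in> configs Lam \<Longrightarrow> \<tau> \<in> configs Lam \<Longrightarrow>
       P \<sigma> \<tau> = (\<Sum>\<mu>\<in>configs Lam. circuit_op Lam Ls \<sigma> \<mu> * m \<mu> * cnj (circuit_op Lam Ls \<tau> \<mu>))"
    and s: "\<sigma> \<in> configs Lam" "\<tau> \<in> configs Lam"
  shows "op_exp Lam P \<sigma> \<tau> =
     (\<Sum>\<mu>\<in>configs Lam. circuit_op Lam Ls \<sigma> \<mu> * exp (m \<mu>) * cnj (circuit_op Lam Ls \<tau> \<mu>))"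
proof -
  let ?C = "circuit_op Lam Ls"
  have e: "(\<lambda>k. op_pow Lam P k \<sigma> \<tau> / of_nat (fact k)) =
      (\<lambda>k. \<Sum>\<mu>\<in>configs Lam. ?C \<sigma> \<mu> * (m \<mu> ^ k / of_nat (fact k)) * cnj (?C \<tau> \<mu>))"
    by (simp add: fun_eq_iff pow_formula[OF fin v P s] sum_divide_distrib)
  have "(\<lambda>k. \<Sum>\<mu>\<in>configs Lam. ?C \<sigma> \<mu> * (m \<mu> ^ k / of_nat (fact k)) * cnj (?C \<tau> \<mu>)) sums
      (\<Sum>\<mu>\<in>configs Lam. ?C \<sigma> \<mu> * exp (m \<mu>) * cnj (?C \<tau> \<mu>))"
    by (intro sums_sum sums_mult sums_mult2 exp_sums_c)
  then show ?thesis unfolding op_exp_def e by (rule sums_unique[symmetric])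
qed

lemma mult_expand:
  assumes fin: "finite Lam" and Y: "Y \<subseteq> Lam" and l: "loc Lam Y P" and s: "\<sigma> \<in> configs Lam" "\<tau> \<in> configs Lam"
  shows "op_mult Lam P Q \<sigma> \<tau> = (\<Sum>a\<in>configs Y. P \<sigma> (merge Y a \<sigma>) * Q (merge Y a \<sigma>) \<tau>)"
proof -
  have "op_mult Lam P Q \<sigma> \<tau> = (\<Sum>\<mu>\<in>configs Lam. if agr Y \<mu> \<sigma> then P \<sigma> \<mu> * Q \<mu> \<tau> else 0)"
    unfolding op_mult_def
  proof (intro sum.cong refl)
    fix \<mu> assume m: "\<mu> \<in> configs Lam"
    show "P \<sigma> \<mu> * Q \<mu> \<tau> = (if agr Y \<mu> \<sigma> then P \<sigma> \<mu> * Q \<mu> \<tau> else 0)"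
    proof (cases "agr Y \<mu> \<sigma>")
      case False
      then have "\<not> agr Y \<sigma> \<mu>" by (auto simp: agr_def)
      then show ?thesis using loc_zero[OF l s(1) m] False by simp
    qed simp
  qed
  also have "\<dots> = (\<Sum>a\<in>configs Y. P \<sigma> (merge Y a \<sigma>) * Q (merge Y a \<sigma>) \<tau>)"
    by (rule sum_agr[OF fin Y s(1)])
  finally show ?thesis .
qed

lemma merge_restr: "a \<in> configs Y \<Longrightarrow> merge Y a (restr Y \<sigma>) = a"
  by (auto simp: merge_def restr_def configs_iff fun_eq_iff)

lemma mult_loc:
  assumes fin: "finite Lam" and Y: "Y \<subseteq> Lam" and lP: "loc Lam Y P" and lQ: "loc Lam Y Q"
  shows "loc Lam Y (op_mult Lam P Q)"
  unfolding loc_def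
proof (intro ballI)
  fix \<sigma> \<tau> assume s: "\<sigma> \<in> configs Lam" "\<tau> \<in> configs Lam"
  have r: "restr Y \<sigma> \<in> configs Lam" "restr Y \<tau> \<in> configs Lam" using s restr_configs2 by auto
  show "op_mult Lam P Q \<sigma> \<tau> = (if agr Y \<sigma> \<tau> then op_mult Lam P Q (restr Y \<sigma>) (restr Y \<tau>) else 0)"
  proof (cases "agr Y \<sigma> \<tau>")
    case True
    have "op_mult Lam P Q \<sigma> \<tau> = (\<Sum>a\<in>configs Y. P \<sigma> (merge Y a \<sigma>) * Q (merge Y a \<sigma>) \<tau>)"
      by (rule mult_expand[OF fin Y lP s])
    also have "\<dots> = (\<Sum>a\<in>configs Y. P (restr Y \<sigma>) (merge Y a (restr Y \<sigma>)) * Q (merge Y a (restr Y \<sigma>)) (restr Y \<tau>))"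
    proof (intro sum.cong refl)
      fix a assume a: "a \<in> configs Y"
      have m: "merge Y a \<sigma> \<in> configs Lam" "a \<in> configs Lam" using a s Y merge_configs2 configs_mono by blast+
      have ag: "agr Y \<sigma> (merge Y a \<sigma>)" "agr Y (merge Y a \<sigma>) \<tau>" using True by (auto simp: agr_def merge_def)
      have "P \<sigma> (merge Y a \<sigma>) = P (restr Y \<sigma>) a"
        using locD[OF lP s(1) m(1)] ag by (simp add: restr_merge_same[OF a])
      moreover have "Q (merge Y a \<sigma>) \<tau> = Q a (restr Y \<tau>)"
        using locD[OF lQ m(1) s(2)] ag by (simp add: restr_merge_same[OF a])
      ultimately show "P \<sigma> (merge Y a \<sigma>) * Q (merge Y a \<sigma>) \<tau> =
          P (restr Y \<sigma>) (merge Y a (restr Y \<sigma>)) * Q (merge Y a (restr Y \<sigma>)) (restr Y \<tau>)"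
        by (simp add: merge_restr[OF a])
    qed
    also have "\<dots> = op_mult Lam P Q (restr Y \<sigma>) (restr Y \<tau>)"
      by (rule mult_expand[OF fin Y lP r, symmetric])
    finally show ?thesis using True by simp
  next
    case False
    have "op_mult Lam P Q \<sigma> \<tau> = (\<Sum>a\<in>configs Y. P \<sigma> (merge Y a \<sigma>) * Q (merge Y a \<sigma>) \<tau>)"
      by (rule mult_expand[OF fin Y lP s])
    also have "\<dots> = 0"
    proof (intro sum.neutral ballI)
      fix a assume a: "a \<in> configs Y"
      have m: "merge Y a \<sigma> \<in> configs Lam" using a s Y merge_configs2 by blast
      have "\<not> agr Y (merge Y a \<sigma>) \<tau>" using False by (auto simp: agr_def merge_def)
      then show "P \<sigma> (merge Y a \<sigma>) * Q (merge Y a \<sigma>) \<tau> = 0" using loc_zero[OF lQ m s(2)] by simp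
    qed
    finally show ?thesis using False by simp
  qed
qed

lemma pow_loc:
  assumes fin: "finite Lam" and Y: "Y \<subseteq> Lam" and l: "loc Lam Y P"
  shows "loc Lam Y (op_pow Lam P k)"
proof (induction k)
  case 0
  then show ?case using loc_mono[OF op_id_loc] by simp
next
  case (Suc k)
  then show ?case by (simp add: mult_loc[OF fin Y _ l])
qed

lemma exp_loc:
  assumes fin: "finite Lam" and Y: "Y \<subseteq> Lam" and l: "loc Lam Y P"
  shows "loc Lam Y (op_exp Lam P)"
  unfolding loc_def
proof (intro ballI)
  fix \<sigma> \<tau> assume s: "\<sigma> \<in> configs Lam" "\<tau> \<in> configs Lam"
  have e: "op_pow Lam P k \<sigma> \<tau> = (if agr Y \<sigma> \<tau> then op_pow Lam P k (restr Y \<sigma>) (restr Y \<tau>) else 0)" for k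
    using locD[OF pow_loc[OF fin Y l] s] .
  show "op_exp Lam P \<sigma> \<tau> = (if agr Y \<sigma> \<tau> then op_exp Lam P (restr Y \<sigma>) (restr Y \<tau>) else 0)"
    unfolding op_exp_def e by simp
qed

lemma pow_restrict:
  assumes fin: "finite Lam" and Y: "Y \<subseteq> Lam" and l: "loc Lam Y P" and a: "\<alpha> \<in> configs Y"
  shows "\<gamma> \<in> configs Y \<Longrightarrow> op_pow Y P k \<alpha> \<gamma> = op_pow Lam P k \<alpha> \<gamma>"
proof (induction k arbitrary: \<gamma>)
  case 0
  then show ?case using configs_mono[OF Y] a by (auto simp: op_id_def)
next
  case (Suc k)
  have fc: "finite (configs Lam)" using fin finite_configs by blast
  have g: "\<gamma> \<in> configs Lam" using Suc.prems configs_mono[OF Y] by blast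
  have "op_pow Y P (Suc k) \<alpha> \<gamma> = (\<Sum>\<mu>\<in>configs Y. op_pow Lam P k \<alpha> \<mu> * P \<mu> \<gamma>)"
    by (simp add: op_mult_def Suc.IH)
  also have "\<dots> = (\<Sum>\<mu>\<in>configs Lam. op_pow Lam P k \<alpha> \<mu> * P \<mu> \<gamma>)"
  proof (rule sum.mono_neutral_left[OF fc configs_mono[OF Y]], intro ballI)
    fix \<mu> assume m: "\<mu> \<in> configs Lam - configs Y"
    then obtain i where "i \<notin> Y" "\<mu> i" by (auto simp: configs_iff)
    moreover have "\<not> \<gamma> i" using Suc.prems \<open>i \<notin> Y\<close> by (auto simp: configs_iff)
    ultimately have "\<not> agr Y \<mu> \<gamma>" by (auto simp: agr_def)
    then show "op_pow Lam P k \<alpha> \<mu> * P \<mu> \<gamma> = 0" using loc_zero[OF l _ g] m by simp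
  qed
  also have "\<dots> = op_pow Lam P (Suc k) \<alpha> \<gamma>" by (simp add: op_mult_def)
  finally show ?case .
qed

lemma exp_restrict:
  assumes fin: "finite Lam" and Y: "Y \<subseteq> Lam" and l: "loc Lam Y P" and a: "\<alpha> \<in> configs Y" "\<gamma> \<in> configs Y"
  shows "op_exp Y P \<alpha> \<gamma> = op_exp Lam P \<alpha> \<gamma>"
  unfolding op_exp_def using pow_restrict[OF fin Y l a] by simp

lemma merge_bot: "\<nu> \<in> configs S \<Longrightarrow> merge S \<nu> (\<lambda>_. False) = \<nu>"
  by (auto simp: merge_def configs_iff fun_eq_iff)

lemma agr_merge:
  assumes AX: "A \<subseteq> X" and s: "\<sigma> \<in> configs A" "\<tau> \<in> configs A"
  shows "agr X (merge S \<nu> \<sigma>) (merge S \<nu> \<tau>)"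
  unfolding agr_def
proof (intro allI impI)
  fix k assume k: "k \<notin> X"
  then have "k \<notin> A" using AX by blast
  then have "\<not> \<sigma> k" "\<not> \<tau> k" using s by (auto simp: configs_iff)
  then show "merge S \<nu> \<sigma> k = merge S \<nu> \<tau> k" by (simp add: merge_def)
qed

lemma restr_merge2:
  assumes AX: "A \<subseteq> X" and XL: "X \<subseteq> Lam"
  shows "restr X (merge (Lam - A) (merge (X - A) a b) \<sigma>) = restr X (merge (X - A) a \<sigma>)"
proof
  fix k
  show "restr X (merge (Lam - A) (merge (X - A) a b) \<sigma>) k = restr X (merge (X - A) a \<sigma>) k"
  proof (cases "k \<in> X")
    case True
    then have "k \<in> Lam" using XL by blast
    then show ?thesis using True by (cases "k \<in> A") (simp_all add: restr_def merge_def)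
  qed (simp add: restr_def)
qed

lemma avg:
  assumes fin: "finite Lam" and AX: "A \<subseteq> X" and XL: "X \<subseteq> Lam" and l: "loc Lam X F"
    and s: "\<sigma> \<in> configs A" "\<tau> \<in> configs A"
  shows "(\<Sum>\<nu>\<in>configs (Lam - A). F (merge (Lam - A) \<nu> \<sigma>) (merge (Lam - A) \<nu> \<tau>)) =
    of_nat (2 ^ card (Lam - X)) * (\<Sum>\<nu>\<in>configs (X - A). F (merge (X - A) \<nu> \<sigma>) (merge (X - A) \<nu> \<tau>))"
proof -
  have eq: "Lam - A = (X - A) \<union> (Lam - X)" using AX XL by auto
  have c: "configs (Lam - A) = configs ((X - A) \<union> (Lam - X))" using eq by simp
  have cAL: "configs A \<subseteq> configs Lam" by (rule configs_mono[OF subset_trans[OF AX XL]])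
  have sL: "\<sigma> \<in> configs Lam" "\<tau> \<in> configs Lam" using s cAL by auto
  have fX: "finite (X - A)" "finite (Lam - X)" using fin XL finite_subset by auto
  have "(\<Sum>\<nu>\<in>configs (Lam - A). F (merge (Lam - A) \<nu> \<sigma>) (merge (Lam - A) \<nu> \<tau>)) =
     (\<Sum>a\<in>configs (X - A). \<Sum>b\<in>configs (Lam - X).
        F (merge (Lam - A) (merge (X - A) a b) \<sigma>) (merge (Lam - A) (merge (X - A) a b) \<tau>))"
    unfolding c by (rule split_sum[OF fX]) blast
  also have "\<dots> = (\<Sum>a\<in>configs (X - A). \<Sum>b\<in>configs (Lam - X). F (merge (X - A) a \<sigma>) (merge (X - A) a \<tau>))"
  proof (intro sum.cong refl)
    fix a b assume a: "a \<in> configs (X - A)" and b: "b \<in> configs (Lam - X)"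
    have ab: "merge (X - A) a b \<in> configs (Lam - A)" unfolding c by (rule merge_configs[OF a b])
    show "F (merge (Lam - A) (merge (X - A) a b) \<sigma>) (merge (Lam - A) (merge (X - A) a b) \<tau>) =
        F (merge (X - A) a \<sigma>) (merge (X - A) a \<tau>)"
    proof (rule loc_eqI[OF l])
      show "merge (Lam - A) (merge (X - A) a b) \<sigma> \<in> configs Lam" "merge (Lam - A) (merge (X - A) a b) \<tau> \<in> configs Lam"
        by (rule merge_configs2[OF ab sL(1)], blast) (rule merge_configs2[OF ab sL(2)], blast)
      show "merge (X - A) a \<sigma> \<in> configs Lam" "merge (X - A) a \<tau> \<in> configs Lam"
        by (rule merge_configs2[OF a sL(1)], use XL in blast) (rule merge_configs2[OF a sL(2)], use XL in blast)
      show "agr X (merge (Lam - A) (merge (X - A) a b) \<sigma>) (merge (Lam - A) (merge (X - A) a b) \<tau>) =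
          agr X (merge (X - A) a \<sigma>) (merge (X - A) a \<tau>)"
        using agr_merge[OF AX s] by blast
      show "restr X (merge (Lam - A) (merge (X - A) a b) \<sigma>) = restr X (merge (X - A) a \<sigma>)"
        by (rule restr_merge2[OF AX XL])
      show "restr X (merge (Lam - A) (merge (X - A) a b) \<tau>) = restr X (merge (X - A) a \<tau>)"
        by (rule restr_merge2[OF AX XL])
    qed
  qed
  also have "\<dots> = (\<Sum>a\<in>configs (X - A). of_nat (2 ^ card (Lam - X)) * F (merge (X - A) a \<sigma>) (merge (X - A) a \<tau>))"
    by (intro sum.cong refl) (simp add: card_configs[OF fX(2)])
  also have "\<dots> = of_nat (2 ^ card (Lam - X)) * (\<Sum>\<nu>\<in>configs (X - A). F (merge (X - A) \<nu> \<sigma>) (merge (X - A) \<nu> \<tau>))"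
    by (simp add: sum_distrib_left)
  finally show ?thesis .
qed

lemma avg_trace:
  assumes fin: "finite Lam" and XL: "X \<subseteq> Lam" and l: "loc Lam X F"
  shows "(\<Sum>\<alpha>\<in>configs Lam. F \<alpha> \<alpha>) = of_nat (2 ^ card (Lam - X)) * (\<Sum>\<alpha>\<in>configs X. F \<alpha> \<alpha>)"
proof -
  have "(\<Sum>\<nu>\<in>configs (Lam - {}). F (merge (Lam - {}) \<nu> (\<lambda>_. False)) (merge (Lam - {}) \<nu> (\<lambda>_. False))) =
    of_nat (2 ^ card (Lam - X)) * (\<Sum>\<nu>\<in>configs (X - {}). F (merge (X - {}) \<nu> (\<lambda>_. False)) (merge (X - {}) \<nu> (\<lambda>_. False)))"
    by (rule avg[OF fin _ XL l]) auto
  moreover have "(\<Sum>\<nu>\<in>configs (Lam - {}). F (merge (Lam - {}) \<nu> (\<lambda>_. False)) (merge (Lam - {}) \<nu> (\<lambda>_. False))) = (\<Sum>\<alpha>\<in>configs Lam. F \<alpha> \<alpha>)"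
    by (intro sum.cong) (auto simp: merge_bot)
  moreover have "(\<Sum>\<nu>\<in>configs (X - {}). F (merge (X - {}) \<nu> (\<lambda>_. False)) (merge (X - {}) \<nu> (\<lambda>_. False))) = (\<Sum>\<alpha>\<in>configs X. F \<alpha> \<alpha>)"
    by (intro sum.cong) (auto simp: merge_bot)
  ultimately show ?thesis by simp
qed

lemma pick:
  assumes fin: "finite Lam" and AL: "A \<subseteq> Lam" and s: "\<sigma> \<in> configs A" "\<tau> \<in> configs A"
  shows "(\<Sum>\<gamma>\<in>configs Lam. \<Sum>\<alpha>\<in>configs Lam. ext_op Lam A (\<lambda>x y. if x = \<tau> \<and> y = \<sigma> then 1 else 0) \<gamma> \<alpha> * G \<alpha> \<gamma>) =
    (\<Sum>\<nu>\<in>configs (Lam - A). G (merge (Lam - A) \<nu> \<sigma>) (merge (Lam - A) \<nu> \<tau>))"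
proof -
  let ?Ob = "ext_op Lam A (\<lambda>x y. if x = \<tau> \<and> y = \<sigma> then 1 else 0)"
  have fA: "finite (configs A)" using fin AL finite_subset finite_configs by blast
  have inner: "(\<Sum>\<alpha>\<in>configs Lam. ?Ob \<gamma> \<alpha> * G \<alpha> \<gamma>) = (if restr A \<gamma> = \<tau> then G (merge A \<sigma> \<gamma>) \<gamma> else 0)"
    if g: "\<gamma> \<in> configs Lam" for \<gamma>
  proof -
    have "(\<Sum>\<alpha>\<in>configs Lam. ?Ob \<gamma> \<alpha> * G \<alpha> \<gamma>) =
       (\<Sum>\<alpha>\<in>configs Lam. if agr A \<alpha> \<gamma> then (if restr A \<gamma> = \<tau> \<and> restr A \<alpha> = \<sigma> then G \<alpha> \<gamma> else 0) else 0)"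
    proof (intro sum.cong refl)
      fix \<alpha> assume a: "\<alpha> \<in> configs Lam"
      have "agr A \<gamma> \<alpha> \<longleftrightarrow> agr A \<alpha> \<gamma>" by (auto simp: agr_def)
      then show "?Ob \<gamma> \<alpha> * G \<alpha> \<gamma> = (if agr A \<alpha> \<gamma> then (if restr A \<gamma> = \<tau> \<and> restr A \<alpha> = \<sigma> then G \<alpha> \<gamma> else 0) else 0)"
        by (simp add: ext_op_eq[OF g a])
    qed
    also have "\<dots> = (\<Sum>b\<in>configs A. if restr A \<gamma> = \<tau> \<and> restr A (merge A b \<gamma>) = \<sigma> then G (merge A b \<gamma>) \<gamma> else 0)"
      by (rule sum_agr[OF fin AL g])
    also have "\<dots> = (\<Sum>b\<in>configs A. if restr A \<gamma> = \<tau> \<and> b = \<sigma> then G (merge A b \<gamma>) \<gamma> else 0)"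
      by (intro sum.cong refl) (simp add: restr_merge_same)
    also have "\<dots> = (if restr A \<gamma> = \<tau> \<and> \<sigma> = \<sigma> then G (merge A \<sigma> \<gamma>) \<gamma> else 0)"
      by (rule sum_single_nz[OF fA s(1)]) auto
    finally show ?thesis by simp
  qed
  have eq: "Lam = (Lam - A) \<union> A" using AL by auto
  have fL: "finite (Lam - A)" "finite A" using fin AL finite_subset by auto
  have "(\<Sum>\<gamma>\<in>configs Lam. \<Sum>\<alpha>\<in>configs Lam. ?Ob \<gamma> \<alpha> * G \<alpha> \<gamma>) =
      (\<Sum>\<gamma>\<in>configs Lam. if restr A \<gamma> = \<tau> then G (merge A \<sigma> \<gamma>) \<gamma> else 0)"
    by (intro sum.cong refl inner)
  also have "\<dots> = (\<Sum>\<gamma>\<in>configs ((Lam - A) \<union> A). if restr A \<gamma> = \<tau> then G (merge A \<sigma> \<gamma>) \<gamma> else 0)"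
    using eq by simp
  also have "\<dots> = (\<Sum>\<nu>\<in>configs (Lam - A). \<Sum>b\<in>configs A. if restr A (merge (Lam - A) \<nu> b) = \<tau>
       then G (merge A \<sigma> (merge (Lam - A) \<nu> b)) (merge (Lam - A) \<nu> b) else 0)"
    by (rule split_sum[OF fL]) auto
  also have "\<dots> = (\<Sum>\<nu>\<in>configs (Lam - A). G (merge (Lam - A) \<nu> \<sigma>) (merge (Lam - A) \<nu> \<tau>))"
  proof (intro sum.cong refl)
    fix \<nu> assume n: "\<nu> \<in> configs (Lam - A)"
    have rb: "restr A (merge (Lam - A) \<nu> b) = b" if "b \<in> configs A" for b
      using that by (auto simp: restr_def merge_def configs_iff fun_eq_iff)
    have mm: "merge A \<sigma> (merge (Lam - A) \<nu> \<tau>) = merge (Lam - A) \<nu> \<sigma>"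
      using s by (auto simp: merge_def configs_iff fun_eq_iff)
    have "(\<Sum>b\<in>configs A. if restr A (merge (Lam - A) \<nu> b) = \<tau>
       then G (merge A \<sigma> (merge (Lam - A) \<nu> b)) (merge (Lam - A) \<nu> b) else 0) =
       (if restr A (merge (Lam - A) \<nu> \<tau>) = \<tau>
       then G (merge A \<sigma> (merge (Lam - A) \<nu> \<tau>)) (merge (Lam - A) \<nu> \<tau>) else 0)"
      by (rule sum_single_nz[OF fA s(2)]) (simp add: rb)
    then show "(\<Sum>b\<in>configs A. if restr A (merge (Lam - A) \<nu> b) = \<tau>
       then G (merge A \<sigma> (merge (Lam - A) \<nu> b)) (merge (Lam - A) \<nu> b) else 0) =
       G (merge (Lam - A) \<nu> \<sigma>) (merge (Lam - A) \<nu> \<tau>)"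
      using rb[OF s(2)] mm by simp
  qed
  finally show ?thesis .
qed

lemma sum3:
  "(\<Sum>\<gamma>\<in>J. \<Sum>\<alpha>\<in>I. ob \<gamma> \<alpha> * (\<Sum>\<mu>\<in>M. c \<alpha> \<mu> * w \<mu> * d \<gamma> \<mu>)) =
   (\<Sum>\<mu>\<in>M. w \<mu> * (\<Sum>\<alpha>\<in>I. (\<Sum>\<gamma>\<in>J. d \<gamma> \<mu> * ob \<gamma> \<alpha>) * c \<alpha> \<mu>))"
    for ob c d :: "_ \<Rightarrow> _ \<Rightarrow> complex"
proof -
  have "(\<Sum>\<gamma>\<in>J. \<Sum>\<alpha>\<in>I. ob \<gamma> \<alpha> * (\<Sum>\<mu>\<in>M. c \<alpha> \<mu> * w \<mu> * d \<gamma> \<mu>)) =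
     (\<Sum>\<gamma>\<in>J. \<Sum>\<alpha>\<in>I. \<Sum>\<mu>\<in>M. w \<mu> * (d \<gamma> \<mu> * ob \<gamma> \<alpha> * c \<alpha> \<mu>))"
    by (simp add: sum_distrib_left mult_ac)
  also have "\<dots> = (\<Sum>\<alpha>\<in>I. \<Sum>\<gamma>\<in>J. \<Sum>\<mu>\<in>M. w \<mu> * (d \<gamma> \<mu> * ob \<gamma> \<alpha> * c \<alpha> \<mu>))"
    by (rule sum.swap)
  also have "\<dots> = (\<Sum>\<alpha>\<in>I. \<Sum>\<mu>\<in>M. \<Sum>\<gamma>\<in>J. w \<mu> * (d \<gamma> \<mu> * ob \<gamma> \<alpha> * c \<alpha> \<mu>))"
    by (intro sum.cong refl sum.swap)
  also have "\<dots> = (\<Sum>\<mu>\<in>M. \<Sum>\<alpha>\<in>I. \<Sum>\<gamma>\<in>J. w \<mu> * (d \<gamma> \<mu> * ob \<gamma> \<alpha> * c \<alpha> \<mu>))"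
    by (rule sum.swap)
  also have "\<dots> = (\<Sum>\<mu>\<in>M. w \<mu> * (\<Sum>\<alpha>\<in>I. (\<Sum>\<gamma>\<in>J. d \<gamma> \<mu> * ob \<gamma> \<alpha>) * c \<alpha> \<mu>))"
    by (simp add: sum_distrib_left sum_distrib_right)
  finally show ?thesis .
qed

lemma wr_split: "exp (- \<beta> * real (m + n)) = exp (- \<beta> * real m) * exp (- \<beta> * real n)"
  by (simp add: distrib_left flip: exp_add)

definition wr :: "real \<Rightarrow> site set \<Rightarrow> (site \<Rightarrow> bool) \<Rightarrow> complex" where
  "wr \<beta> S \<mu> = complex_of_real (exp (- \<beta> * real (card {i \<in> S. \<mu> i})))"

lemma factor:
  assumes fin: "finite Lam" and LL: "L \<subseteq> Lam" and l: "loc Lam L K" and SL: "S \<subseteq> Lam"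
  shows "(\<Sum>\<mu>\<in>configs Lam. wr \<beta> S \<mu> * K \<mu> \<mu>) =
    (\<Sum>a\<in>configs L. wr \<beta> (S \<inter> L) a * K a a) * (\<Sum>b\<in>configs (Lam - L). wr \<beta> (S - L) b)"
proof -
  have eq: "Lam = L \<union> (Lam - L)" using LL by auto
  have fL: "finite L" "finite (Lam - L)" using fin LL finite_subset by auto
  have fS: "finite S" using fin SL finite_subset by auto
  have "(\<Sum>\<mu>\<in>configs Lam. wr \<beta> S \<mu> * K \<mu> \<mu>) = (\<Sum>\<mu>\<in>configs (L \<union> (Lam - L)). wr \<beta> S \<mu> * K \<mu> \<mu>)"
    using eq by simp
  also have "\<dots> = (\<Sum>a\<in>configs L. \<Sum>b\<in>configs (Lam - L). wr \<beta> S (merge L a b) * K (merge L a b) (merge L a b))"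
    by (rule split_sum[OF fL]) auto
  also have "\<dots> = (\<Sum>a\<in>configs L. \<Sum>b\<in>configs (Lam - L). wr \<beta> (S \<inter> L) a * K a a * wr \<beta> (S - L) b)"
  proof (intro sum.cong refl)
    fix a b assume a: "a \<in> configs L" and b: "b \<in> configs (Lam - L)"
    have m: "merge L a b \<in> configs Lam" using merge_configs[OF a b] eq by simp
    have "K (merge L a b) (merge L a b) = K a a"
      using locD[OF l m m] by (simp add: restr_merge_same[OF a] agr_def)
    moreover have "{i \<in> S. merge L a b i} = {i \<in> S \<inter> L. a i} \<union> {i \<in> S - L. b i}"
      by (auto simp: merge_def)
    then have "card {i \<in> S. merge L a b i} = card {i \<in> S \<inter> L. a i} + card {i \<in> S - L. b i}"
      using fS by (simp add: card_Un_disjoint disjoint_iff)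
    then have "wr \<beta> S (merge L a b) = wr \<beta> (S \<inter> L) a * wr \<beta> (S - L) b"
      unfolding wr_def by (simp only: wr_split of_real_mult)
    ultimately show "wr \<beta> S (merge L a b) * K (merge L a b) (merge L a b) = wr \<beta> (S \<inter> L) a * K a a * wr \<beta> (S - L) b"
      by (simp add: mult_ac)
  qed
  also have "\<dots> = (\<Sum>a\<in>configs L. wr \<beta> (S \<inter> L) a * K a a) * (\<Sum>b\<in>configs (Lam - L). wr \<beta> (S - L) b)"
    by (simp add: sum_product)
  finally show ?thesis .
qed

lemma wr_sum_nz:
  assumes "finite Y"
  shows "(\<Sum>b\<in>configs Y. wr \<beta> S b) \<noteq> 0"
proof -
  have "(\<Sum>b\<in>configs Y. wr \<beta> S b) = complex_of_real (\<Sum>b\<in>configs Y. exp (- \<beta> * real (card {i \<in> S. b i})))"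
    by (simp add: wr_def)
  moreover have "(\<Sum>b\<in>configs Y. exp (- \<beta> * real (card {i \<in> S. b i}))) > 0"
  proof (rule sum_pos)
    show "finite (configs Y)" using assms finite_configs by blast
    show "configs Y \<noteq> {}" using bot_configs by blast
  qed simp
  ultimately show ?thesis by (simp only: of_real_sum[symmetric] of_real_eq_0_iff)
qed

lemma ratio:
  fixes \<beta> :: real
  assumes fin: "finite Lam" and v: "\<forall>L\<in>set Ls. valid_layer Lam L" and AY: "A \<subseteq> Y" and YL: "Y \<subseteq> Lam"
    and s: "\<sigma> \<in> configs A" "\<tau> \<in> configs A"
  shows "ptrace (Y - A) (gibbs_sub Lam Ls \<beta> Y) \<sigma> \<tau> =
    (\<Sum>a\<in>configs (nbhd Lam (length Ls) A). wr \<beta> (Sset Lam Ls Y \<inter> nbhd Lam (length Ls) A) a *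
        hconj Lam (circuit_op Lam Ls) (ext_op Lam A (\<lambda>x y. if x = \<tau> \<and> y = \<sigma> then 1 else 0)) a a) /
    (\<Sum>a\<in>configs (nbhd Lam (length Ls) A). wr \<beta> (Sset Lam Ls Y \<inter> nbhd Lam (length Ls) A) a *
        hconj Lam (circuit_op Lam Ls) (op_id Lam) a a)"
proof -
  define C where "C = circuit_op Lam Ls"
  define S where "S = Sset Lam Ls Y"
  define L where "L = nbhd Lam (length Ls) A"
  define Ob where "Ob = ext_op Lam A (\<lambda>x y. if x = \<tau> \<and> y = \<sigma> then 1 else 0)"
  define K where "K = hconj Lam C Ob"
  define K0 where "K0 = hconj Lam C (op_id Lam)"
  define P where "P = (\<lambda>\<sigma> \<tau>. - complex_of_real \<beta> * H_sub Lam Ls Y \<sigma> \<tau>)"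
  define m where "m = (\<lambda>\<mu>. - complex_of_real \<beta> * of_nat (card {i \<in> S. \<mu> i}))"
  define F where "F = op_exp Lam P"
  have AL: "A \<subseteq> Lam" using AY YL by blast
  have SL: "S \<subseteq> Lam" by (auto simp: S_def Sset_def)
  have LL: "L \<subseteq> Lam" by (simp add: L_def nbhd_sub)
  have fc: "finite (configs Lam)" using fin finite_configs by blast
  have hloc: "loc Lam Y (parent_term Lam Ls i)" if i: "i \<in> S" for i
  proof -
    have "op_supp Lam (parent_term Lam Ls i) \<subseteq> Y" using i by (simp add: S_def Sset_def)
    then show ?thesis using loc_mono[OF op_supp_loc[OF fin]] by blast
  qed
  have Hsum: "H_sub Lam Ls Y \<sigma>' \<tau>' = (\<Sum>i\<in>S. parent_term Lam Ls i \<sigma>' \<tau>')" for \<sigma>' \<tau>'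
    by (simp add: H_sub_def S_def Sset_def)
  have Ploc: "loc Lam Y P"
    unfolding loc_def
  proof (intro ballI)
    fix \<sigma>' \<tau>' assume s': "\<sigma>' \<in> configs Lam" "\<tau>' \<in> configs Lam"
    have e: "parent_term Lam Ls i \<sigma>' \<tau>' = (if agr Y \<sigma>' \<tau>' then parent_term Lam Ls i (restr Y \<sigma>') (restr Y \<tau>') else 0)"
      if "i \<in> S" for i using locD[OF hloc[OF that] s'] .
    show "P \<sigma>' \<tau>' = (if agr Y \<sigma>' \<tau>' then P (restr Y \<sigma>') (restr Y \<tau>') else 0)"
    proof (cases "agr Y \<sigma>' \<tau>'")
      case True
      then show ?thesis unfolding P_def Hsum using e by (simp cong: sum.cong)
    next
      case False
      then show ?thesis unfolding P_def Hsum using e by (simp cong: sum.cong)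
    qed
  qed
  have Pform: "P \<sigma>' \<tau>' = (\<Sum>\<mu>\<in>configs Lam. C \<sigma>' \<mu> * m \<mu> * cnj (C \<tau>' \<mu>))"
    if "\<sigma>' \<in> configs Lam" "\<tau>' \<in> configs Lam" for \<sigma>' \<tau>'
    unfolding P_def H_formula[OF fin that] m_def C_def S_def
    by (simp add: sum_distrib_left mult_ac)
  have em: "exp (m \<mu>) = wr \<beta> S \<mu>" for \<mu>
  proof -
    have e: "m \<mu> = complex_of_real (- \<beta> * real (card {i \<in> S. \<mu> i}))" by (simp add: m_def)
    have "exp (m \<mu>) = exp (complex_of_real (- \<beta> * real (card {i \<in> S. \<mu> i})))" by (simp only: e)
    also have "\<dots> = complex_of_real (exp (- \<beta> * real (card {i \<in> S. \<mu> i})))" by (rule exp_of_real)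
    finally show ?thesis unfolding wr_def .
  qed
  have Fform: "F \<sigma>' \<tau>' = (\<Sum>\<mu>\<in>configs Lam. C \<sigma>' \<mu> * wr \<beta> S \<mu> * cnj (C \<tau>' \<mu>))"
    if "\<sigma>' \<in> configs Lam" "\<tau>' \<in> configs Lam" for \<sigma>' \<tau>'
    unfolding F_def using exp_formula[OF fin v Pform[unfolded C_def] that] em by (simp add: C_def)
  have Floc: "loc Lam Y F" unfolding F_def by (rule exp_loc[OF fin YL Ploc])
  have Eeq: "op_exp Y P \<alpha> \<gamma> = F \<alpha> \<gamma>" if "\<alpha> \<in> configs Y" "\<gamma> \<in> configs Y" for \<alpha> \<gamma>
    unfolding F_def by (rule exp_restrict[OF fin YL Ploc that])
  have tr: "op_trace Y (op_exp Y P) = (\<Sum>\<alpha>\<in>configs Y. F \<alpha> \<alpha>)"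
    unfolding op_trace_def by (intro sum.cong refl Eeq)
  have YA: "(Y - A) \<union> A = Y" using AY by blast
  have mY: "merge (Y - A) \<nu> \<rho> \<in> configs Y" if "\<nu> \<in> configs (Y - A)" "\<rho> \<in> configs A" for \<nu> \<rho>
    using merge_configs[OF that] YA by simp
  define NY where "NY = (\<Sum>\<nu>\<in>configs (Y - A). F (merge (Y - A) \<nu> \<sigma>) (merge (Y - A) \<nu> \<tau>))"
  define DY where "DY = (\<Sum>\<alpha>\<in>configs Y. F \<alpha> \<alpha>)"
  define NL where "NL = (\<Sum>\<nu>\<in>configs (Lam - A). F (merge (Lam - A) \<nu> \<sigma>) (merge (Lam - A) \<nu> \<tau>))"
  define DL where "DL = (\<Sum>\<alpha>\<in>configs Lam. F \<alpha> \<alpha>)"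
  have step1: "ptrace (Y - A) (gibbs_sub Lam Ls \<beta> Y) \<sigma> \<tau> = NY / DY"
  proof -
    have "ptrace (Y - A) (gibbs_sub Lam Ls \<beta> Y) \<sigma> \<tau> =
        (\<Sum>\<nu>\<in>configs (Y - A). F (merge (Y - A) \<nu> \<sigma>) (merge (Y - A) \<nu> \<tau>) / DY)"
      unfolding ptrace_def gibbs_sub_def Let_def P_def[symmetric] tr DY_def
      by (intro sum.cong refl) (simp add: Eeq mY s)
    then show ?thesis by (simp add: NY_def sum_divide_distrib)
  qed
  have NL: "NL = of_nat (2 ^ card (Lam - Y)) * NY"
    unfolding NL_def NY_def by (rule avg[OF fin AY YL Floc s])
  have DL: "DL = of_nat (2 ^ card (Lam - Y)) * DY"
    unfolding DL_def DY_def by (rule avg_trace[OF fin YL Floc])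
  have step2: "NY / DY = NL / DL"
    unfolding NL DL by (simp del: of_nat_power)
  have NLK: "NL = (\<Sum>\<mu>\<in>configs Lam. wr \<beta> S \<mu> * K \<mu> \<mu>)"
  proof -
    have "NL = (\<Sum>\<gamma>\<in>configs Lam. \<Sum>\<alpha>\<in>configs Lam. Ob \<gamma> \<alpha> * F \<alpha> \<gamma>)"
      unfolding NL_def Ob_def by (rule pick[OF fin AL s, symmetric])
    also have "\<dots> = (\<Sum>\<gamma>\<in>configs Lam. \<Sum>\<alpha>\<in>configs Lam. Ob \<gamma> \<alpha> * (\<Sum>\<mu>\<in>configs Lam. C \<alpha> \<mu> * wr \<beta> S \<mu> * cnj (C \<gamma> \<mu>)))"
      by (intro sum.cong refl) (simp add: Fform)
    also have "\<dots> = (\<Sum>\<mu>\<in>configs Lam. wr \<beta> S \<mu> * (\<Sum>\<alpha>\<in>configs Lam. (\<Sum>\<gamma>\<in>configs Lam. cnj (C \<gamma> \<mu>) * Ob \<gamma> \<alpha>) * C \<alpha> \<mu>))"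
      by (rule sum3)
    also have "\<dots> = (\<Sum>\<mu>\<in>configs Lam. wr \<beta> S \<mu> * K \<mu> \<mu>)"
      by (simp add: K_def hconj_def op_mult_def op_adj_def)
    finally show ?thesis .
  qed
  have DLK: "DL = (\<Sum>\<mu>\<in>configs Lam. wr \<beta> S \<mu> * K0 \<mu> \<mu>)"
  proof -
    have "DL = (\<Sum>\<gamma>\<in>configs Lam. \<Sum>\<alpha>\<in>configs Lam. op_id Lam \<gamma> \<alpha> * F \<alpha> \<gamma>)"
      unfolding DL_def
    proof (intro sum.cong refl)
      fix \<gamma> assume g: "\<gamma> \<in> configs Lam"
      show "F \<gamma> \<gamma> = (\<Sum>\<alpha>\<in>configs Lam. op_id Lam \<gamma> \<alpha> * F \<alpha> \<gamma>)"
        by (subst sum_single_nz[OF fc g]) (auto simp: op_id_def g)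
    qed
    also have "\<dots> = (\<Sum>\<gamma>\<in>configs Lam. \<Sum>\<alpha>\<in>configs Lam. op_id Lam \<gamma> \<alpha> * (\<Sum>\<mu>\<in>configs Lam. C \<alpha> \<mu> * wr \<beta> S \<mu> * cnj (C \<gamma> \<mu>)))"
      by (intro sum.cong refl) (simp add: Fform)
    also have "\<dots> = (\<Sum>\<mu>\<in>configs Lam. wr \<beta> S \<mu> * (\<Sum>\<alpha>\<in>configs Lam. (\<Sum>\<gamma>\<in>configs Lam. cnj (C \<gamma> \<mu>) * op_id Lam \<gamma> \<alpha>) * C \<alpha> \<mu>))"
      by (rule sum3)
    also have "\<dots> = (\<Sum>\<mu>\<in>configs Lam. wr \<beta> S \<mu> * K0 \<mu> \<mu>)"
      by (simp add: K0_def hconj_def op_mult_def op_adj_def)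
    finally show ?thesis .
  qed
  have Kloc: "loc Lam L K"
    unfolding K_def L_def C_def Ob_def by (rule circuit_h[OF fin v ext_op_loc AL])
  have K0loc: "loc Lam L K0"
  proof -
    have "loc Lam (nbhd Lam (length Ls) {}) K0"
      unfolding K0_def C_def by (rule circuit_h[OF fin v op_id_loc]) simp
    moreover have "nbhd Lam (length Ls) {} \<subseteq> L" by (simp add: nbhd_def)
    ultimately show ?thesis by (rule loc_mono)
  qed
  define c where "c = (\<Sum>b\<in>configs (Lam - L). wr \<beta> (S - L) b)"
  have cnz: "c \<noteq> 0" unfolding c_def by (rule wr_sum_nz) (use fin in simp)
  have "NL = (\<Sum>a\<in>configs L. wr \<beta> (S \<inter> L) a * K a a) * c"
    unfolding NLK c_def by (rule factor[OF fin LL Kloc SL])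
  moreover have "DL = (\<Sum>a\<in>configs L. wr \<beta> (S \<inter> L) a * K0 a a) * c"
    unfolding DLK c_def by (rule factor[OF fin LL K0loc SL])
  ultimately have "NL / DL = (\<Sum>a\<in>configs L. wr \<beta> (S \<inter> L) a * K a a) / (\<Sum>a\<in>configs L. wr \<beta> (S \<inter> L) a * K0 a a)"
    using cnz by simp
  then show ?thesis using step1 step2 by (simp add: L_def S_def K_def K0_def C_def Ob_def)
qed

lemma supp_bound:
  assumes fin: "finite Lam" and v: "\<forall>L\<in>set Ls. valid_layer Lam L" and i: "i \<in> Lam"
  shows "op_supp Lam (parent_term Lam Ls i) \<subseteq> nbhd Lam (length Ls) {i}"
proof -
  have "loc Lam (nbhd Lam (length Ls) {i}) (parent_term Lam Ls i)"
    unfolding parent_sconj by (rule circuit_s[OF fin v proj1_loc]) (use i in simp)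
  then show ?thesis using op_supp_le nbhd_sub by blast
qed

lemma dist_le: "(x, y) \<in> lat_edges Lam ^^ j \<Longrightarrow> lat_dist Lam x y \<le> enat j"
  unfolding lat_dist_def by (auto intro: Least_le)

lemma Sset_eq:
  assumes fin: "finite Lam" and v: "\<forall>L\<in>set Ls. valid_layer Lam L"
    and dist: "\<forall>a\<in>A. \<forall>c\<in>C'. lat_dist Lam a c \<ge> enat (4 * length Ls + 1)"
  shows "Sset Lam Ls (A \<union> B \<union> C') \<inter> nbhd Lam (length Ls) A = Sset Lam Ls (A \<union> B) \<inter> nbhd Lam (length Ls) A"
proof
  show "Sset Lam Ls (A \<union> B) \<inter> nbhd Lam (length Ls) A \<subseteq> Sset Lam Ls (A \<union> B \<union> C') \<inter> nbhd Lam (length Ls) A"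
    by (auto simp: Sset_def)
  show "Sset Lam Ls (A \<union> B \<union> C') \<inter> nbhd Lam (length Ls) A \<subseteq> Sset Lam Ls (A \<union> B) \<inter> nbhd Lam (length Ls) A"
  proof
    fix i assume "i \<in> Sset Lam Ls (A \<union> B \<union> C') \<inter> nbhd Lam (length Ls) A"
    then have iS: "i \<in> Lam" "op_supp Lam (parent_term Lam Ls i) \<subseteq> A \<union> B \<union> C'"
      and iL: "i \<in> nbhd Lam (length Ls) A" by (auto simp: Sset_def)
    from iL obtain a j1 where a: "a \<in> A" "j1 \<le> length Ls" "(a, i) \<in> lat_edges Lam ^^ j1"
      unfolding nbhd_def by blast
    have "op_supp Lam (parent_term Lam Ls i) \<subseteq> A \<union> B"
    proof
      fix y assume y: "y \<in> op_supp Lam (parent_term Lam Ls i)"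
      then have "y \<in> nbhd Lam (length Ls) {i}" using supp_bound[OF fin v iS(1)] by blast
      then obtain j2 where j2: "j2 \<le> length Ls" "(i, y) \<in> lat_edges Lam ^^ j2"
        unfolding nbhd_def by blast
      have "(a, y) \<in> lat_edges Lam ^^ (j1 + j2)" using a(3) j2(2) by (auto simp: relpow_add)
      then have le: "lat_dist Lam a y \<le> enat (j1 + j2)" by (rule dist_le)
      show "y \<in> A \<union> B"
      proof (rule ccontr)
        assume "y \<notin> A \<union> B"
        then have "y \<in> C'" using y iS(2) by blast
        then have "enat (4 * length Ls + 1) \<le> lat_dist Lam a y" using dist a(1) by blast
        then have "enat (4 * length Ls + 1) \<le> enat (j1 + j2)" using le order_trans by blast
        then show False using a(2) j2(1) by simp
      qed
    qed
    then show "i \<in> Sset Lam Ls (A \<union> B) \<inter> nbhd Lam (length Ls) A" using iS iL by (simp add: Sset_def)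
  qed
qed

theorem claim5p5:
  fixes Lam :: "site set" and D d :: nat and Ls :: "layer list" and \<beta> :: real
    and A B C' :: "site set"
  assumes "finite Lam" and "\<forall>x\<in>Lam. length x = D"
    and "length Ls = d" and "\<forall>L\<in>set Ls. valid_layer Lam L"
    and "\<beta> > 0"
    and "A \<subseteq> Lam" and "B \<subseteq> Lam" and "C' \<subseteq> Lam"
    and "A \<inter> B = {}" and "A \<inter> C' = {}" and "B \<inter> C' = {}"
    and "\<forall>a\<in>A. \<forall>c\<in>C'. lat_dist Lam a c \<ge> enat (4 * d + 1)"
  shows "\<forall>\<sigma>\<in>configs A. \<forall>\<tau>\<in>configs A.
           ptrace (B \<union> C') (gibbs_sub Lam Ls \<beta> (A \<union> B \<union> C')) \<sigma> \<tau>
         = ptrace B (gibbs_sub Lam Ls \<beta> (A \<union> B)) \<sigma> \<tau>"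
proof (intro ballI)
  fix \<sigma> \<tau> assume s: "\<sigma> \<in> configs A" "\<tau> \<in> configs A"
  note fin = assms(1) and v = assms(4)
  have e1: "(A \<union> B \<union> C') - A = B \<union> C'" using assms(9,10) by blast
  have e2: "(A \<union> B) - A = B" using assms(9) by blast
  have r1: "ptrace ((A \<union> B \<union> C') - A) (gibbs_sub Lam Ls \<beta> (A \<union> B \<union> C')) \<sigma> \<tau> =
    (\<Sum>a\<in>configs (nbhd Lam (length Ls) A). wr \<beta> (Sset Lam Ls (A \<union> B \<union> C') \<inter> nbhd Lam (length Ls) A) a *
        hconj Lam (circuit_op Lam Ls) (ext_op Lam A (\<lambda>x y. if x = \<tau> \<and> y = \<sigma> then 1 else 0)) a a) /
    (\<Sum>a\<in>configs (nbhd Lam (length Ls) A). wr \<beta> (Sset Lam Ls (A \<union> B \<union> C') \<inter> nbhd Lam (length Ls) A) a *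
        hconj Lam (circuit_op Lam Ls) (op_id Lam) a a)"
    by (rule ratio[OF fin v _ _ s]) (use assms(6,7,8) in auto)
  have r2: "ptrace ((A \<union> B) - A) (gibbs_sub Lam Ls \<beta> (A \<union> B)) \<sigma> \<tau> =
    (\<Sum>a\<in>configs (nbhd Lam (length Ls) A). wr \<beta> (Sset Lam Ls (A \<union> B) \<inter> nbhd Lam (length Ls) A) a *
        hconj Lam (circuit_op Lam Ls) (ext_op Lam A (\<lambda>x y. if x = \<tau> \<and> y = \<sigma> then 1 else 0)) a a) /
    (\<Sum>a\<in>configs (nbhd Lam (length Ls) A). wr \<beta> (Sset Lam Ls (A \<union> B) \<inter> nbhd Lam (length Ls) A) a *
        hconj Lam (circuit_op Lam Ls) (op_id Lam) a a)"
    by (rule ratio[OF fin v _ _ s]) (use assms(6,7) in auto)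
  have se: "Sset Lam Ls (A \<union> B \<union> C') \<inter> nbhd Lam (length Ls) A = Sset Lam Ls (A \<union> B) \<inter> nbhd Lam (length Ls) A"
    by (rule Sset_eq[OF fin v]) (use assms(3,12) in simp)
  show "ptrace (B \<union> C') (gibbs_sub Lam Ls \<beta> (A \<union> B \<union> C')) \<sigma> \<tau> = ptrace B (gibbs_sub Lam Ls \<beta> (A \<union> B)) \<sigma> \<tau>"
    using r1 r2 unfolding e1 e2 se by simp
qed

end
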